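(* For all $n\ge1$, $Q_{\lambda_{\mathcal{NC}}}(\mathcal{NC}_n)\cong\mathcal{NCD}yck_n$.
   Context: A partition of $[n]$ is noncrossing if there are no $a<b<c<d$ with $a,c$ in one block and $b,d$ in another. $\mathcal{NC}_n$ is the set of noncrossing partitions of $[n]$ ordered by refinement; a cover $\pi\lessdot\sigma$ merges two blocks $B_i,B_j$, and if $\min B_i<\min B_j$ then $\lambda_{\mathcal{NC}}(\pi\lessdot\sigma)=\max\{a\in B_i:a<\min B_j\}$ (integer labels). $Q_\lambda(P)$ for an edge labeling $\lambda$ of a graded poset $P$ with $\hat 0$ having the rank two switching property (for every saturated chain $\hat0=x_0\lessdot\cdots\lessdot x_k$ and $i$ with $\lambda(x_{i-1}\lessdot x_i)<\lambda(x_i\lessdot x_{i+1})$ there is a unique $x_i'$ with $x_{i-1}\lessdot x_i'\lessdot x_{i+1}$ whose labels are those two labels swapped): $C(P)$ is the set of saturated chains from $\hat0$ ordered by inclusion; $\mathbf c_1\sim_\lambda\mathbf c_2$ iff they end at the same $y$ and are connected by quadratic exchanges (replacing $x_i$ by $x_i'$, forwards or backwards) among maximal chains of $[\hat0,y]$; $Q_\lambda(P)$ is the set of classes ordered by the transitive closure of: $X\le Y$ if some $\mathbf c\in X$, $\mathbf d\in Y$ have $\mathbf c\subseteq\mathbf d$. ($\lambda_{\mathcal{NC}}$ has this property.) Labeled Dyck paths: for a finite set $B=\{b_1<\cdots<b_j\}\subseteq[n]$, a labeled Dyck path on $B$ is a lattice path from $(0,0)$ to $(j-1,j-1)$ with unit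 north and east steps never going below $y=x$, where the bottom point $(i-1,0)$ carries the label $b_i$; equivalently it is a function $e:B\to\mathbb Z_{\ge0}$ ($e(b_i)$ = number of north steps on the line $x=i-1$) with $\sum_i e(b_i)=j-1$ and $e(b_1)+\cdots+e(b_i)\ge i$ for $1\le i\le j-1$. Merging: given labeled Dyck paths $e$ on $B$ and $f$ on $C$ with $B\cap C=\emptyset$, $b_1=\min B<\min C$, and $C$ contained in an interval $(b_i,b_{i+1})$ of consecutive elements of $B$ (with $b_{j+1}=\infty$), the merge is the labeled Dyck path $g$ on $B\cup C$ with $g=f$ on $C$, $g=e$ on $B\setminus\{b_i\}$ and $g(b_i)=e(b_i)+1$ (here $b_i=\max\{b\in B:b<\min C\}$). $\mathcal{NCD}yck_n$ is the set of collections of labeled Dyck paths whose label sets form a noncrossing partition of $[n]$, partially ordered as the reflexive-transitive closure of the relation $F\lessdot F'$ whenever $F'$ is obtained from $F$ by merging two of its labeled Dyck paths (with the resulting label sets still a noncrossing partition). *)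

theory Defs
  imports Main "HOL-Library.Disjoint_Sets" "HOL-Library.Sublist"
begin

definition pcover :: "'a set \<Rightarrow> ('a \<Rightarrow> 'a \<Rightarrow> bool) \<Rightarrow> 'a \<Rightarrow> 'a \<Rightarrow> bool" where
  "pcover P le x y \<longleftrightarrow> x \<in> P \<and> y \<in> P \<and> le x y \<and> x \<noteq> y \<and>
     (\<forall>z\<in>P. le x z \<and> le z y \<longrightarrow> z = x \<or> z = y)"

definition sat_chains :: "'a set \<Rightarrow> ('a \<Rightarrow> 'a \<Rightarrow> bool) \<Rightarrow> 'a \<Rightarrow> 'a list set" where
  "sat_chains P le z0 = {c. c \<noteq> [] \<and> hd c = z0 \<and> set c \<subseteq> P \<and>
     (\<forall>i. Suc i < length c \<longrightarrow> pcover P le (c ! i) (c ! Suc i))}"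

definition quad_exch :: "'a set \<Rightarrow> ('a \<Rightarrow> 'a \<Rightarrow> bool) \<Rightarrow> ('a \<Rightarrow> 'a \<Rightarrow> 'l::linorder)
    \<Rightarrow> 'a list \<Rightarrow> 'a list \<Rightarrow> bool" where
  "quad_exch P le lam c d \<longleftrightarrow> (\<exists>i x'. 0 < i \<and> Suc i < length c \<and> d = c[i := x'] \<and>
     lam (c ! (i - 1)) (c ! i) < lam (c ! i) (c ! Suc i) \<and>
     pcover P le (c ! (i - 1)) x' \<and> pcover P le x' (c ! Suc i) \<and>
     lam (c ! (i - 1)) x' = lam (c ! i) (c ! Suc i) \<and>
     lam x' (c ! Suc i) = lam (c ! (i - 1)) (c ! i))"

definition chain_equiv :: "'a set \<Rightarrow> ('a \<Rightarrow> 'a \<Rightarrow> bool) \<Rightarrow> 'a \<Rightarrow> ('a \<Rightarrow> 'a \<Rightarrow> 'l::linorder)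
    \<Rightarrow> ('a list \<times> 'a list) set" where
  "chain_equiv P le z0 lam =
     {(c, d). c \<in> sat_chains P le z0 \<and> d \<in> sat_chains P le z0 \<and>
              (quad_exch P le lam c d \<or> quad_exch P le lam d c)}\<^sup>*"

definition Q_carrier :: "'a set \<Rightarrow> ('a \<Rightarrow> 'a \<Rightarrow> bool) \<Rightarrow> 'a \<Rightarrow> ('a \<Rightarrow> 'a \<Rightarrow> 'l::linorder)
    \<Rightarrow> 'a list set set" where
  "Q_carrier P le z0 lam = (\<lambda>c. chain_equiv P le z0 lam `` {c}) ` sat_chains P le z0"

text \<open>Order on classes: transitive closure of "some chain of X is contained in
  (= is a prefix of, for saturated chains from bottom) some chain of Y".\<close>
definition Q_le :: "'a set \<Rightarrow> ('a \<Rightarrow> 'a \<Rightarrow> bool) \<Rightarrow> 'a \<Rightarrow> ('a \<Rightarrow> 'a \<Rightarrow> 'l::linorder)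
    \<Rightarrow> 'a list set \<Rightarrow> 'a list set \<Rightarrow> bool" where
  "Q_le P le z0 lam X Y \<longleftrightarrow>
     (X, Y) \<in> {(X, Y). X \<in> Q_carrier P le z0 lam \<and> Y \<in> Q_carrier P le z0 lam \<and>
                     (\<exists>c\<in>X. \<exists>d\<in>Y. prefix c d)}\<^sup>+"

definition order_iso :: "'a set \<Rightarrow> ('a \<Rightarrow> 'a \<Rightarrow> bool) \<Rightarrow> 'b set \<Rightarrow> ('b \<Rightarrow> 'b \<Rightarrow> bool) \<Rightarrow> bool" where
  "order_iso A leA B leB \<longleftrightarrow>
     (\<exists>f. bij_betw f A B \<and> (\<forall>x\<in>A. \<forall>y\<in>A. leA x y \<longleftrightarrow> leB (f x) (f y)))"

definition noncrossing :: "nat set set \<Rightarrow> bool" where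
  "noncrossing \<pi> \<longleftrightarrow> \<not> (\<exists>a b c d. a < b \<and> b < c \<and> c < d \<and>
     (\<exists>B\<in>\<pi>. \<exists>B'\<in>\<pi>. B \<noteq> B' \<and> a \<in> B \<and> c \<in> B \<and> b \<in> B' \<and> d \<in> B'))"

definition NC :: "nat \<Rightarrow> nat set set set" where
  "NC n = {\<pi>. partition_on {1..n} \<pi> \<and> noncrossing \<pi>}"

definition refines :: "nat set set \<Rightarrow> nat set set \<Rightarrow> bool" where
  "refines \<pi> \<sigma> \<longleftrightarrow> (\<forall>B\<in>\<pi>. \<exists>C\<in>\<sigma>. B \<subseteq> C)"

definition NC_bot :: "nat \<Rightarrow> nat set set" where
  "NC_bot n = (\<lambda>i. {i}) ` {1..n}"

definition lamNC :: "nat set set \<Rightarrow> nat set set \<Rightarrow> nat" where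
  "lamNC \<pi> \<sigma> = (THE a. \<exists>Bi\<in>\<pi>. \<exists>Bj\<in>\<pi>. Bi \<notin> \<sigma> \<and> Bj \<notin> \<sigma> \<and> Bi \<noteq> Bj \<and>
       Min Bi < Min Bj \<and> a = Max {x\<in>Bi. x < Min Bj})"

text \<open>A labeled Dyck path on B is e : B -> N; we represent it by a function on nat
  that is 0 outside B.  For B = {b1 < ... < bj}: sum of e = j - 1 and
  e(b1)+...+e(bi) >= i for i <= j-1.\<close>
definition dyck :: "nat set \<Rightarrow> (nat \<Rightarrow> nat) \<Rightarrow> bool" where
  "dyck B e \<longleftrightarrow> finite B \<and> B \<noteq> {} \<and> (\<forall>x. x \<notin> B \<longrightarrow> e x = 0) \<and>
     (\<Sum>b\<in>B. e b) = card B - 1 \<and>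
     (\<forall>b\<in>B. b \<noteq> Max B \<longrightarrow> card {c\<in>B. c \<le> b} \<le> (\<Sum>c\<in>{c\<in>B. c \<le> b}. e c))"

definition NCDyck :: "nat \<Rightarrow> (nat set \<times> (nat \<Rightarrow> nat)) set set" where
  "NCDyck n = {F. (\<forall>(B, e)\<in>F. dyck B e) \<and> inj_on fst F \<and> fst ` F \<in> NC n}"

definition mergeable :: "nat set \<Rightarrow> nat set \<Rightarrow> bool" where
  "mergeable B C \<longleftrightarrow> B \<inter> C = {} \<and> Min B < Min C \<and> (\<forall>b\<in>B. b < Min C \<or> Max C < b)"

definition dyck_merge :: "nat set \<Rightarrow> (nat \<Rightarrow> nat) \<Rightarrow> nat set \<Rightarrow> (nat \<Rightarrow> nat)
    \<Rightarrow> nat set \<times> (nat \<Rightarrow> nat)" where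
  "dyck_merge B e C f = (B \<union> C, \<lambda>x. if x \<in> C then f x
       else if x = Max {b\<in>B. b < Min C} then e x + 1 else e x)"

definition merge_step :: "nat \<Rightarrow> (nat set \<times> (nat \<Rightarrow> nat)) set \<Rightarrow> (nat set \<times> (nat \<Rightarrow> nat)) set \<Rightarrow> bool" where
  "merge_step n F F' \<longleftrightarrow> F \<in> NCDyck n \<and> F' \<in> NCDyck n \<and>
     (\<exists>B e C f. (B, e) \<in> F \<and> (C, f) \<in> F \<and> (B, e) \<noteq> (C, f) \<and> mergeable B C \<and>
        F' = insert (dyck_merge B e C f) (F - {(B, e), (C, f)}))"

definition NCDyck_le :: "nat \<Rightarrow> (nat set \<times> (nat \<Rightarrow> nat)) set \<Rightarrow> (nat set \<times> (nat \<Rightarrow> nat)) set \<Rightarrow> bool" where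
  "NCDyck_le n F F' \<longleftrightarrow> (F, F') \<in> {(F, F'). merge_step n F F'}\<^sup>*"

end

theory Submission
  imports Defs "HOL-Library.Multiset"
begin

definition mrg :: "nat set set \<Rightarrow> nat set \<Rightarrow> nat set \<Rightarrow> nat set set" where
  "mrg \<pi> A B = insert (A \<union> B) (\<pi> - {A, B})"

lemma part_block_eq:
  assumes "partition_on S \<pi>" "P \<in> \<pi>" "Q \<in> \<pi>" "x \<in> P" "x \<in> Q"
  shows "P = Q"
  using assms unfolding partition_on_def disjoint_def by blast

lemma part_nonempty: "partition_on S \<pi> \<Longrightarrow> P \<in> \<pi> \<Longrightarrow> P \<noteq> {}"
  unfolding partition_on_def by auto

lemma part_sub: "partition_on S \<pi> \<Longrightarrow> P \<in> \<pi> \<Longrightarrow> P \<subseteq> S"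
  unfolding partition_on_def by auto

lemma part_ex: "partition_on S \<pi> \<Longrightarrow> x \<in> S \<Longrightarrow> \<exists>P\<in>\<pi>. x \<in> P"
  unfolding partition_on_def by auto

lemma NC_part: "\<pi> \<in> NC n \<Longrightarrow> partition_on {1..n} \<pi>"
  unfolding NC_def by auto

lemma NC_nc: "\<pi> \<in> NC n \<Longrightarrow> noncrossing \<pi>"
  unfolding NC_def by auto

lemma NC_finite_block: "\<pi> \<in> NC n \<Longrightarrow> P \<in> \<pi> \<Longrightarrow> finite P"
  using part_sub[OF NC_part] by (meson finite_atLeastAtMost finite_subset)

lemma NC_finite: "\<pi> \<in> NC n \<Longrightarrow> finite \<pi>"
  using finite_elements[OF _ NC_part] by blast

lemma part_mrg:
  assumes "partition_on S \<pi>" "A \<in> \<pi>" "B \<in> \<pi>" "A \<noteq> B"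
  shows "partition_on S (mrg \<pi> A B)"
proof (rule partition_onI)
  show "\<Union> (mrg \<pi> A B) = S" using assms partition_onD1[OF assms(1)] unfolding mrg_def by auto
  show "{} \<notin> mrg \<pi> A B" using assms part_nonempty[OF assms(1)] unfolding mrg_def by auto
  fix p q assume "p \<in> mrg \<pi> A B" "q \<in> mrg \<pi> A B" "p \<noteq> q"
  then show "disjnt p q" using assms part_block_eq[OF assms(1)] unfolding mrg_def disjnt_def
    by auto
qed

lemma nc_cross:
  assumes "noncrossing \<pi>" "P \<in> \<pi>" "Q \<in> \<pi>" "P \<noteq> Q" "a < b" "b < c" "c < d" "a \<in> P" "c \<in> P" "b \<in> Q" "d \<in> Q"
  shows False
  using assms unfolding noncrossing_def by blast

lemma refines_antisym:
  assumes "partition_on S \<pi>" "partition_on S \<sigma>" "refines \<pi> \<sigma>" "refines \<sigma> \<pi>"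
  shows "\<pi> = \<sigma>"
proof -
  have *: "P \<in> \<tau>" if h: "partition_on S \<rho>" "partition_on S \<tau>" "refines \<rho> \<tau>" "refines \<tau> \<rho>" "P \<in> \<rho>" for \<rho> \<tau> P
  proof -
    obtain Q where Q: "Q \<in> \<tau>" "P \<subseteq> Q" using h unfolding refines_def by blast
    obtain R where R: "R \<in> \<rho>" "Q \<subseteq> R" using h Q unfolding refines_def by blast
    have "P \<noteq> {}" using part_nonempty h by blast
    then have "P = R" using part_block_eq[OF h(1) h(5) R(1)] Q R by blast
    then show ?thesis using Q R by auto
  qed
  show ?thesis using *[OF assms] *[OF assms(2,1,4,3)] by blast
qed

lemma subset_part_eq:
  assumes "partition_on S \<pi>" "partition_on S \<tau>" "\<tau> \<subseteq> \<pi>"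
  shows "\<tau> = \<pi>"
proof -
  have "P \<in> \<tau>" if h: "P \<in> \<pi>" for P
  proof -
    obtain x where "x \<in> P" using part_nonempty[OF assms(1) h] by blast
    then have "x \<in> S" using part_sub[OF assms(1) h] by blast
    then obtain Q where "Q \<in> \<tau>" "x \<in> Q" using part_ex[OF assms(2)] by blast
    then show ?thesis using part_block_eq[OF assms(1) h] assms(3) \<open>x \<in> P\<close> by blast
  qed
  then show ?thesis using assms by blast
qed


lemma refines_block:
  assumes "partition_on S \<tau>" "refines \<pi> \<tau>" "P \<in> \<pi>" "T \<in> \<tau>" "x \<in> P" "x \<in> T"
  shows "P \<subseteq> T"
proof -
  obtain T' where "T' \<in> \<tau>" "P \<subseteq> T'" using assms(2,3) unfolding refines_def by blast
  then show ?thesis using part_block_eq[OF assms(1) \<open>T' \<in> \<tau>\<close> assms(4)] assms(5,6) by blast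
qed

lemma mrg_in: "A \<union> B \<in> mrg \<pi> A B" unfolding mrg_def by auto

lemma mrg_other: "P \<in> \<pi> \<Longrightarrow> P \<noteq> A \<Longrightarrow> P \<noteq> B \<Longrightarrow> P \<in> mrg \<pi> A B" unfolding mrg_def by auto

lemma mrg_cases: "T \<in> mrg \<pi> A B \<Longrightarrow> T = A \<union> B \<or> (T \<in> \<pi> \<and> T \<noteq> A \<and> T \<noteq> B)"
  unfolding mrg_def by auto

lemma union_notin:
  assumes "partition_on S \<pi>" "A \<in> \<pi>" "B \<in> \<pi>" "A \<noteq> B"
  shows "A \<union> B \<notin> \<pi>"
proof
  assume h: "A \<union> B \<in> \<pi>"
  obtain a where "a \<in> A" using part_nonempty assms by blast
  then have "A \<union> B = A" using part_block_eq[OF assms(1) h assms(2)] by blast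
  moreover obtain b where "b \<in> B" using part_nonempty assms by blast
  ultimately have "A \<union> B = B" using part_block_eq[OF assms(1) h assms(3)] by blast
  then show False using \<open>A \<union> B = A\<close> assms(4) by blast
qed

lemma refines_mrg: "refines \<pi> (mrg \<pi> A B)"
  unfolding refines_def mrg_def by auto

lemma mrg_cover:
  assumes "\<pi> \<in> NC n" "A \<in> \<pi>" "B \<in> \<pi>" "A \<noteq> B" "mrg \<pi> A B \<in> NC n"
  shows "pcover (NC n) refines \<pi> (mrg \<pi> A B)"
proof -
  let ?\<sigma> = "mrg \<pi> A B"
  have p: "partition_on {1..n} \<pi>" using NC_part assms by blast
  have ps: "partition_on {1..n} ?\<sigma>" using NC_part assms by blast
  have ne: "\<pi> \<noteq> ?\<sigma>" using union_notin[OF p assms(2-4)] mrg_in by metis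
  have "\<tau> = \<pi> \<or> \<tau> = ?\<sigma>" if t: "\<tau> \<in> NC n" "refines \<pi> \<tau>" "refines \<tau> ?\<sigma>" for \<tau>
  proof -
    have pt: "partition_on {1..n} \<tau>" using NC_part t by blast
    have sub: "T \<in> \<pi> \<or> T = A \<union> B" if T: "T \<in> \<tau>" for T
    proof -
      obtain t0 where "t0 \<in> T" using part_nonempty[OF pt T] by blast
      obtain S where S: "S \<in> ?\<sigma>" "T \<subseteq> S" using t(3) T unfolding refines_def by blast
      have blk: "\<exists>P\<in>\<pi>. u \<in> P \<and> P \<subseteq> T" if "u \<in> T" for u
      proof -
        have "u \<in> {1..n}" using part_sub[OF pt T] that by blast
        then obtain P where "P \<in> \<pi>" "u \<in> P" using part_ex[OF p] by blast
        then show ?thesis using refines_block[OF pt t(2) _ T] that by blast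
      qed
      from mrg_cases[OF S(1)] show ?thesis
      proof
        assume "S \<in> \<pi> \<and> S \<noteq> A \<and> S \<noteq> B"
        then have "S \<in> \<pi>" by blast
        obtain P where "P \<in> \<pi>" "t0 \<in> P" "P \<subseteq> T" using blk \<open>t0 \<in> T\<close> by blast
        then have "P = S" using part_block_eq[OF p _ \<open>S \<in> \<pi>\<close>] S(2) by blast
        then have "T = S" using \<open>P \<subseteq> T\<close> S(2) by blast
        then show ?thesis using \<open>S \<in> \<pi>\<close> by simp
      next
        assume SAB: "S = A \<union> B"
        have AT: "A \<subseteq> T" if h: "x \<in> T" "x \<in> A" for x
        proof -
          obtain P where "P \<in> \<pi>" "x \<in> P" "P \<subseteq> T" using blk[OF h(1)] by blast
          then have "P = A" using part_block_eq[OF p _ assms(2)] h(2) by blast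
          then show ?thesis using \<open>P \<subseteq> T\<close> by simp
        qed
        have BT: "B \<subseteq> T" if h: "x \<in> T" "x \<in> B" for x
        proof -
          obtain P where "P \<in> \<pi>" "x \<in> P" "P \<subseteq> T" using blk[OF h(1)] by blast
          then have "P = B" using part_block_eq[OF p _ assms(3)] h(2) by blast
          then show ?thesis using \<open>P \<subseteq> T\<close> by simp
        qed
        have TAB: "T \<subseteq> A \<union> B" using S(2) SAB by simp
        show ?thesis
        proof (cases "T \<inter> A = {}")
          case True
          then have "T \<subseteq> B" using TAB by blast
          then have "T = B" using BT \<open>t0 \<in> T\<close> by blast
          then show ?thesis using assms(3) by simp
        next
          case False
          then have "A \<subseteq> T" using AT by blast
          show ?thesis
          proof (cases "T \<inter> B = {}")
            case True
            then have "T = A" using TAB \<open>A \<subseteq> T\<close> by blast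
            then show ?thesis using assms(2) by simp
          next
            case False
            then have "B \<subseteq> T" using BT by blast
            then show ?thesis using TAB \<open>A \<subseteq> T\<close> by blast
          qed
        qed
      qed
    qed
    show ?thesis
    proof (cases "A \<union> B \<in> \<tau>")
      case True
      have "\<tau> \<subseteq> ?\<sigma>"
      proof
        fix T assume T: "T \<in> \<tau>"
        show "T \<in> ?\<sigma>"
        proof (cases "T = A \<union> B")
          case True then show ?thesis using mrg_in by metis
        next
          case False
          then have "T \<in> \<pi>" using sub T by blast
          have "T \<noteq> A"
          proof
            assume "T = A"
            obtain a where "a \<in> A" using part_nonempty p assms(2) by blast
            then show False using part_block_eq[OF pt T \<open>A \<union> B \<in> \<tau>\<close>, of a] \<open>T = A\<close> False by blast
          qed
          moreover have "T \<noteq> B"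
          proof
            assume "T = B"
            obtain a where "a \<in> B" using part_nonempty p assms(3) by blast
            then show False using part_block_eq[OF pt T \<open>A \<union> B \<in> \<tau>\<close>, of a] \<open>T = B\<close> False by blast
          qed
          ultimately show ?thesis using mrg_other \<open>T \<in> \<pi>\<close> by metis
        qed
      qed
      then show ?thesis using subset_part_eq[OF ps pt] by blast
    next
      case False
      then have "\<tau> \<subseteq> \<pi>" using sub by blast
      then show ?thesis using subset_part_eq[OF p pt] by blast
    qed
  qed
  then show ?thesis unfolding pcover_def using assms refines_mrg ne by blast
qed


lemma nc_merge_core:
  assumes nc: "noncrossing \<pi>" and PQE: "P \<in> \<pi>" "Q \<in> \<pi>" "E \<in> \<pi>" "P \<noteq> Q" "P \<noteq> E" "Q \<noteq> E"
    and dj: "P \<inter> E = {}" "Q \<inter> E = {}" "P \<inter> Q = {}"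
    and xy: "x \<in> P" "y \<in> Q" "x < y" "\<forall>z\<in>E. \<not> (x < z \<and> z < y)"
    and abcd: "a < b" "b < c" "c < d"
    and cs: "(a \<in> P \<union> Q \<and> c \<in> P \<union> Q \<and> b \<in> E \<and> d \<in> E) \<or> (a \<in> E \<and> c \<in> E \<and> b \<in> P \<union> Q \<and> d \<in> P \<union> Q)"
  shows False
proof -
  note cr = nc_cross[OF nc]
  from cs show False
  proof
    assume h: "a \<in> P \<union> Q \<and> c \<in> P \<union> Q \<and> b \<in> E \<and> d \<in> E"
    then have b: "b \<in> E" and d: "d \<in> E" by auto
    have inPin: "\<And>p. p \<in> P \<Longrightarrow> b < p \<Longrightarrow> p < d \<Longrightarrow> a \<in> P \<Longrightarrow> False"
      using cr[OF PQE(1) PQE(3) PQE(5)] abcd b d by blast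
    consider "a \<in> P" "c \<in> P" | "a \<in> Q" "c \<in> Q" | "a \<in> P" "c \<in> Q" | "a \<in> Q" "c \<in> P" using h by blast
    then show False
    proof cases
      case 1 then show ?thesis using cr[OF PQE(1) PQE(3) PQE(5)] abcd b d by blast
    next
      case 2 then show ?thesis using cr[OF PQE(2) PQE(3) PQE(6)] abcd b d by blast
    next
      case 3
      have "\<not> y < b"
      proof
        assume "y < b" then show False using cr[OF PQE(2) PQE(3) PQE(6), of y b c d] 3 abcd b d xy by blast
      qed
      moreover have "\<not> d < y"
      proof
        assume "d < y" then show False using cr[OF PQE(3) PQE(2) PQE(6)[symmetric], of b c d y] 3 abcd b d xy by blast
      qed
      moreover have "y \<noteq> b" "y \<noteq> d" using dj b d xy by auto
      ultimately have yy: "b < y" "y < d" by auto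
      have "\<not> (b < x \<and> x < d)"
      proof
        assume "b < x \<and> x < d" then show False using cr[OF PQE(1) PQE(3) PQE(5), of a b x d] 3 abcd b d xy by blast
      qed
      moreover have "x \<noteq> b" using dj b xy by auto
      ultimately have "x < b" using yy xy by linarith
      then show ?thesis using xy(4) b yy by blast
    next
      case 4
      have "\<not> x < b"
      proof
        assume "x < b" then show False using cr[OF PQE(1) PQE(3) PQE(5), of x b c d] 4 abcd b d xy by blast
      qed
      moreover have "\<not> d < x"
      proof
        assume "d < x" then show False using cr[OF PQE(3) PQE(1) PQE(5)[symmetric], of b c d x] 4 abcd b d xy by blast
      qed
      moreover have "x \<noteq> b" "x \<noteq> d" using dj b d xy by auto
      ultimately have xx: "b < x" "x < d" by auto
      have "\<not> (b < y \<and> y < d)"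
      proof
        assume "b < y \<and> y < d" then show False using cr[OF PQE(2) PQE(3) PQE(6), of a b y d] 4 abcd b d xy by blast
      qed
      moreover have "y \<noteq> d" using dj d xy by auto
      ultimately have "d < y" using xx xy by linarith
      then show ?thesis using xy(4) d xx by blast
    qed
  next
    assume h: "a \<in> E \<and> c \<in> E \<and> b \<in> P \<union> Q \<and> d \<in> P \<union> Q"
    then have a: "a \<in> E" and c: "c \<in> E" by auto
    consider "b \<in> P" "d \<in> P" | "b \<in> Q" "d \<in> Q" | "b \<in> P" "d \<in> Q" | "b \<in> Q" "d \<in> P" using h by blast
    then show False
    proof cases
      case 1 then show ?thesis using cr[OF PQE(3) PQE(1) PQE(5)[symmetric]] abcd a c by blast
    next
      case 2 then show ?thesis using cr[OF PQE(3) PQE(2) PQE(6)[symmetric]] abcd a c by blast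
    next
      case 3
      have "\<not> c < x"
      proof
        assume "c < x" then show False using cr[OF PQE(3) PQE(1) PQE(5)[symmetric], of a b c x] 3 abcd a c xy by blast
      qed
      moreover have "\<not> x < a"
      proof
        assume "x < a" then show False using cr[OF PQE(1) PQE(3) PQE(5), of x a b c] 3 abcd a c xy by blast
      qed
      moreover have "x \<noteq> a" "x \<noteq> c" using dj a c xy by auto
      ultimately have xx: "a < x" "x < c" by auto
      have "\<not> (a < y \<and> y < c)"
      proof
        assume "a < y \<and> y < c" then show False using cr[OF PQE(3) PQE(2) PQE(6)[symmetric], of a y c d] 3 abcd a c xy by blast
      qed
      moreover have "y \<noteq> c" using dj c xy by auto
      ultimately have "c < y" using xx xy by linarith
      then show ?thesis using xy(4) c xx by blast
    next
      case 4
      have "\<not> c < y"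
      proof
        assume "c < y" then show False using cr[OF PQE(3) PQE(2) PQE(6)[symmetric], of a b c y] 4 abcd a c xy by blast
      qed
      moreover have "\<not> y < a"
      proof
        assume "y < a" then show False using cr[OF PQE(2) PQE(3) PQE(6), of y a b c] 4 abcd a c xy by blast
      qed
      moreover have "y \<noteq> a" "y \<noteq> c" using dj a c xy by auto
      ultimately have yy: "a < y" "y < c" by auto
      have "\<not> (a < x \<and> x < c)"
      proof
        assume "a < x \<and> x < c" then show False using cr[OF PQE(3) PQE(1) PQE(5)[symmetric], of a x c d] 4 abcd a c xy by blast
      qed
      moreover have "x \<noteq> a" using dj a xy by auto
      ultimately have "x < a" using yy xy by linarith
      then show ?thesis using xy(4) a yy by blast
    qed
  qed
qed


lemma cover_mrg:
  assumes "pcover (NC n) refines \<pi> \<sigma>"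
  shows "\<exists>A B. A \<in> \<pi> \<and> B \<in> \<pi> \<and> A \<noteq> B \<and> \<sigma> = mrg \<pi> A B"
proof -
  have \<pi>: "\<pi> \<in> NC n" and \<sigma>: "\<sigma> \<in> NC n" and r: "refines \<pi> \<sigma>" and ne: "\<pi> \<noteq> \<sigma>"
    and btw: "\<And>z. z \<in> NC n \<Longrightarrow> refines \<pi> z \<Longrightarrow> refines z \<sigma> \<Longrightarrow> z = \<pi> \<or> z = \<sigma>"
    using assms unfolding pcover_def by auto
  have p: "partition_on {1..n} \<pi>" and ps: "partition_on {1..n} \<sigma>" using \<pi> \<sigma> NC_part by auto
  obtain C where C: "C \<in> \<sigma>" "C \<notin> \<pi>"
  proof -
    have "\<not> \<sigma> \<subseteq> \<pi>" using subset_part_eq[OF p ps] ne by blast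
    then show ?thesis using that by blast
  qed
  define D where "D = {(x,y). x \<in> C \<and> y \<in> C \<and> x < y \<and> \<not> (\<exists>P\<in>\<pi>. x \<in> P \<and> y \<in> P)}"
  have "D \<noteq> {}"
  proof -
    obtain t where t: "t \<in> C" using part_nonempty[OF ps C(1)] by blast
    then obtain P where P: "P \<in> \<pi>" "t \<in> P" using part_ex[OF p] part_sub[OF ps C(1)] by blast
    have "P \<subseteq> C" using refines_block[OF ps r P(1) C(1) P(2) t] .
    moreover have "P \<noteq> C" using C(2) P(1) by blast
    ultimately obtain u where u: "u \<in> C" "u \<notin> P" by blast
    have nb: "\<not> (\<exists>P'\<in>\<pi>. t \<in> P' \<and> u \<in> P')" using part_block_eq[OF p _ P(1)] P(2) u(2) by blast
    have "t \<noteq> u" using u P by blast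
    then have "(min t u, max t u) \<in> D" using nb t u unfolding D_def by (auto simp: min_def max_def)
    then show ?thesis by blast
  qed
  then obtain xy where "xy \<in> D" by blast
  then obtain x y where xyD: "(x, y) \<in> D" and minD: "\<And>x' y'. (x', y') \<in> D \<Longrightarrow> y - x \<le> y' - x'"
    using ex_has_least_nat[of "\<lambda>p. p \<in> D" xy "\<lambda>(a,b). b - a"] by fastforce
  have xC: "x \<in> C" and yC: "y \<in> C" and xy: "x < y" and nxy: "\<not> (\<exists>P\<in>\<pi>. x \<in> P \<and> y \<in> P)"
    using xyD unfolding D_def by auto
  obtain P where P: "P \<in> \<pi>" "x \<in> P" using part_ex[OF p] part_sub[OF ps C(1)] xC by blast
  obtain Q where Q: "Q \<in> \<pi>" "y \<in> Q" using part_ex[OF p] part_sub[OF ps C(1)] yC by blast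
  have PQ: "P \<noteq> Q" using nxy P Q by blast
  have PC: "P \<subseteq> C" using refines_block[OF ps r P(1) C(1) P(2) xC] .
  have QC: "Q \<subseteq> C" using refines_block[OF ps r Q(1) C(1) Q(2) yC] .
  have gap: "\<not> (x < z \<and> z < y)" if z: "z \<in> C" for z
  proof
    assume h: "x < z \<and> z < y"
    obtain R where R: "R \<in> \<pi>" "z \<in> R" using part_ex[OF p] part_sub[OF ps C(1)] z by blast
    show False
    proof (cases "R = P")
      case True
      have "(z, y) \<in> D"
      proof -
        have "\<not> (\<exists>P'\<in>\<pi>. z \<in> P' \<and> y \<in> P')"
        proof
          assume "\<exists>P'\<in>\<pi>. z \<in> P' \<and> y \<in> P'"
          then obtain P' where "P' \<in> \<pi>" "z \<in> P'" "y \<in> P'" by blast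
          then have "P' = P" "P' = Q" using part_block_eq[OF p] R True Q by blast+
          then show False using PQ by simp
        qed
        then show ?thesis using z yC h unfolding D_def by auto
      qed
      then show False using minD[of z y] h by linarith
    next
      case False
      have "(x, z) \<in> D"
      proof -
        have "\<not> (\<exists>P'\<in>\<pi>. x \<in> P' \<and> z \<in> P')"
        proof
          assume "\<exists>P'\<in>\<pi>. x \<in> P' \<and> z \<in> P'"
          then obtain P' where "P' \<in> \<pi>" "x \<in> P'" "z \<in> P'" by blast
          then have "P' = P" "P' = R" using part_block_eq[OF p] R P by blast+
          then show False using False by simp
        qed
        then show ?thesis using z xC h unfolding D_def by auto
      qed
      then show False using minD[of x z] h by linarith
    qed
  qed
  define \<tau> where "\<tau> = mrg \<pi> P Q"
  have pt: "partition_on {1..n} \<tau>" unfolding \<tau>_def using part_mrg[OF p P(1) Q(1) PQ] .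
  have dj: "X \<inter> Y = {}" if "X \<in> \<pi>" "Y \<in> \<pi>" "X \<noteq> Y" for X Y
    using part_block_eq[OF p that(1,2)] that(3) by blast
  have core: False if E: "E \<in> \<pi>" "E \<noteq> P" "E \<noteq> Q" and abcd: "a < b" "b < c" "c < d"
      and cs: "(a \<in> P \<union> Q \<and> c \<in> P \<union> Q \<and> b \<in> E \<and> d \<in> E) \<or> (a \<in> E \<and> c \<in> E \<and> b \<in> P \<union> Q \<and> d \<in> P \<union> Q)"
      for E a b c d
  proof -
    obtain e where e: "e \<in> E" using part_nonempty[OF p E(1)] by blast
    then obtain D' where D': "D' \<in> \<sigma>" "e \<in> D'" using part_ex[OF ps] part_sub[OF p E(1)] by blast
    have ED: "E \<subseteq> D'" using refines_block[OF ps r E(1) D'(1) e D'(2)] .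
    show False
    proof (cases "D' = C")
      case True
      have "\<forall>z\<in>E. \<not> (x < z \<and> z < y)" using gap ED True by blast
      then show False using nc_merge_core[OF NC_nc[OF \<pi>] P(1) Q(1) E(1) PQ E(2)[symmetric] E(3)[symmetric]
          dj[OF P(1) E(1) E(2)[symmetric]] dj[OF Q(1) E(1) E(3)[symmetric]] dj[OF P(1) Q(1) PQ]
          P(2) Q(2) xy _ abcd cs] by blast
    next
      case False
      from cs show False
      proof
        assume "a \<in> P \<union> Q \<and> c \<in> P \<union> Q \<and> b \<in> E \<and> d \<in> E"
        then show False using nc_cross[OF NC_nc[OF \<sigma>] C(1) D'(1) False[symmetric] abcd] PC QC ED by blast
      next
        assume "a \<in> E \<and> c \<in> E \<and> b \<in> P \<union> Q \<and> d \<in> P \<union> Q"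
        then show False using nc_cross[OF NC_nc[OF \<sigma>] D'(1) C(1) False abcd] PC QC ED by blast
      qed
    qed
  qed
  have nct: "noncrossing \<tau>"
    unfolding noncrossing_def
  proof (clarify)
    fix a b c d X Y assume h: "a < b" "b < c" "c < d" "X \<in> \<tau>" "Y \<in> \<tau>" "X \<noteq> Y" "a \<in> X" "c \<in> X" "b \<in> Y" "d \<in> Y"
    from mrg_cases[OF h(4)[unfolded \<tau>_def]] mrg_cases[OF h(5)[unfolded \<tau>_def]]
    show False
    proof (elim disjE)
      assume "X = P \<union> Q" "Y = P \<union> Q" then show False using h by simp
    next
      assume "X = P \<union> Q" "Y \<in> \<pi> \<and> Y \<noteq> P \<and> Y \<noteq> Q"
      then show False using core[of Y a b c d] h by blast
    next
      assume "X \<in> \<pi> \<and> X \<noteq> P \<and> X \<noteq> Q" "Y = P \<union> Q"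
      then show False using core[of X a b c d] h by blast
    next
      assume "X \<in> \<pi> \<and> X \<noteq> P \<and> X \<noteq> Q" "Y \<in> \<pi> \<and> Y \<noteq> P \<and> Y \<noteq> Q"
      then show False using nc_cross[OF NC_nc[OF \<pi>], of X Y a b c d] h by blast
    qed
  qed
  have tNC: "\<tau> \<in> NC n" using pt nct unfolding NC_def by blast
  have rt: "refines \<tau> \<sigma>"
    unfolding refines_def
  proof
    fix T assume "T \<in> \<tau>"
    from mrg_cases[OF this[unfolded \<tau>_def]] show "\<exists>C'\<in>\<sigma>. T \<subseteq> C'"
    proof
      assume "T = P \<union> Q" then show ?thesis using PC QC C(1) by blast
    next
      assume "T \<in> \<pi> \<and> T \<noteq> P \<and> T \<noteq> Q" then show ?thesis using r unfolding refines_def by blast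
    qed
  qed
  have "\<tau> \<noteq> \<pi>" using union_notin[OF p P(1) Q(1) PQ] mrg_in unfolding \<tau>_def by metis
  then have "\<sigma> = \<tau>" using btw[OF tNC _ rt] refines_mrg unfolding \<tau>_def by metis
  then show ?thesis using P(1) Q(1) PQ unfolding \<tau>_def by blast
qed


definition dn :: "nat set \<Rightarrow> nat \<Rightarrow> nat set" where
  "dn B t = {c\<in>B. c \<le> t}"

lemma dyck_alt:
  "dyck B e \<longleftrightarrow> finite B \<and> B \<noteq> {} \<and> (\<forall>x. x \<notin> B \<longrightarrow> e x = 0) \<and>
     (\<Sum>b\<in>B. e b) = card B - 1 \<and> (\<forall>t. t < Max B \<longrightarrow> card (dn B t) \<le> (\<Sum>c\<in>dn B t. e c))"
proof
  assume d: "dyck B e"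
  have fin: "finite B" and ne: "B \<noteq> {}" using d unfolding dyck_def by auto
  have "card (dn B t) \<le> (\<Sum>c\<in>dn B t. e c)" if t: "t < Max B" for t
  proof (cases "dn B t = {}")
    case True then show ?thesis by simp
  next
    case False
    have fd: "finite (dn B t)" using fin unfolding dn_def by auto
    define b where "b = Max (dn B t)"
    have bin: "b \<in> dn B t" using Max_in[OF fd False] unfolding b_def .
    then have "b \<in> B" "b \<le> t" unfolding dn_def by auto
    then have "b \<noteq> Max B" using t by simp
    moreover have "{c\<in>B. c \<le> b} = dn B t" using Max_ge[OF fd] \<open>b \<le> t\<close> unfolding b_def dn_def by fastforce
    ultimately show ?thesis using d \<open>b \<in> B\<close> unfolding dyck_def by auto
  qed
  then show "finite B \<and> B \<noteq> {} \<and> (\<forall>x. x \<notin> B \<longrightarrow> e x = 0) \<and>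
     (\<Sum>b\<in>B. e b) = card B - 1 \<and> (\<forall>t. t < Max B \<longrightarrow> card (dn B t) \<le> (\<Sum>c\<in>dn B t. e c))"
    using d unfolding dyck_def by auto
next
  assume h: "finite B \<and> B \<noteq> {} \<and> (\<forall>x. x \<notin> B \<longrightarrow> e x = 0) \<and>
     (\<Sum>b\<in>B. e b) = card B - 1 \<and> (\<forall>t. t < Max B \<longrightarrow> card (dn B t) \<le> (\<Sum>c\<in>dn B t. e c))"
  have "b < Max B" if "b \<in> B" "b \<noteq> Max B" for b using that h Max_ge[of B b] by fastforce
  then show "dyck B e" using h unfolding dyck_def dn_def by auto
qed

lemma dyck_G:
  assumes "dyck A e"
  shows "card (dn A t) \<le> (\<Sum>c\<in>dn A t. e c) + 1"
proof (cases "t < Max A")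
  case True then show ?thesis using assms unfolding dyck_alt by fastforce
next
  case False
  have fin: "finite A" and ne: "A \<noteq> {}" using assms unfolding dyck_def by auto
  have "\<forall>c\<in>A. c \<le> t" using False Max_ge[OF fin] by (meson le_trans not_less)
  then have "dn A t = A" unfolding dn_def by auto
  then show ?thesis using assms unfolding dyck_def by simp
qed

lemma sum_plus_ind:
  fixes l :: nat and e :: "nat \<Rightarrow> nat"
  assumes "finite S"
  shows "(\<Sum>x\<in>S. (if x = l then e x + 1 else e x)) = (\<Sum>x\<in>S. e x) + (if l \<in> S then 1 else 0)"
proof -
  have "(\<Sum>x\<in>S. (if x = l then e x + 1 else e x)) = (\<Sum>x\<in>S. e x + (if x = l then 1 else 0))"
    by (rule sum.cong) auto
  also have "\<dots> = (\<Sum>x\<in>S. e x) + (\<Sum>x\<in>S. (if x = l then 1 else 0))" by (simp add: sum.distrib)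
  also have "(\<Sum>x\<in>S. (if x = (l::nat) then 1 else 0::nat)) = (if l \<in> S then 1 else 0)"
    using assms by (simp add: sum.delta)
  finally show ?thesis .
qed

lemma dyck_merge_ok:
  assumes dA: "dyck A e" and dB: "dyck B f" and dj: "A \<inter> B = {}"
    and l: "l \<in> A" "\<forall>b\<in>B. l < b"
  shows "dyck (A \<union> B) (\<lambda>x. if x \<in> B then f x else if x = l then e x + 1 else e x)"
    (is "dyck _ ?g")
proof -
  have finA: "finite A" and neA: "A \<noteq> {}" and zA: "\<forall>x. x \<notin> A \<longrightarrow> e x = 0"
    and sA: "(\<Sum>b\<in>A. e b) = card A - 1" using dA unfolding dyck_def by auto
  have finB: "finite B" and neB: "B \<noteq> {}" and zB: "\<forall>x. x \<notin> B \<longrightarrow> f x = 0"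
    and sB: "(\<Sum>b\<in>B. f b) = card B - 1" using dB unfolding dyck_def by auto
  have cA: "card A \<ge> 1" and cB: "card B \<ge> 1" using finA neA finB neB by (auto simp: Suc_le_eq card_gt_0_iff)
  have sumsplit: "(\<Sum>x\<in>dn A t \<union> dn B t. ?g x) = (\<Sum>x\<in>dn A t. e x) + (if l \<in> dn A t then 1 else 0) + (\<Sum>x\<in>dn B t. f x)" for t
  proof -
    have f1: "finite (dn A t)" "finite (dn B t)" using finA finB unfolding dn_def by auto
    have "(\<Sum>x\<in>dn A t \<union> dn B t. ?g x) = (\<Sum>x\<in>dn A t. ?g x) + (\<Sum>x\<in>dn B t. ?g x)"
      using dj f1 by (intro sum.union_disjoint) (auto simp: dn_def)
    moreover have "(\<Sum>x\<in>dn A t. ?g x) = (\<Sum>x\<in>dn A t. (if x = l then e x + 1 else e x))"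
      using dj by (intro sum.cong) (auto simp: dn_def)
    moreover have "(\<Sum>x\<in>dn B t. ?g x) = (\<Sum>x\<in>dn B t. f x)"
      by (intro sum.cong) (auto simp: dn_def)
    ultimately show ?thesis using sum_plus_ind[OF f1(1), of l e] by simp
  qed
  have dnU: "dn (A \<union> B) t = dn A t \<union> dn B t" for t unfolding dn_def by auto
  have cardU: "card (dn (A \<union> B) t) = card (dn A t) + card (dn B t)" for t
    unfolding dnU using dj finA finB by (intro card_Un_disjoint) (auto simp: dn_def)
  have fin: "finite (A \<union> B)" using finA finB by simp
  have zero: "\<forall>x. x \<notin> A \<union> B \<longrightarrow> ?g x = 0" using zA zB l by auto
  have tot: "(\<Sum>x\<in>A \<union> B. ?g x) = card (A \<union> B) - 1"
  proof -
    have "dn (A \<union> B) (Max (A \<union> B)) = A \<union> B" "dn A (Max (A \<union> B)) = A" "dn B (Max (A \<union> B)) = B"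
      using fin Max_ge[OF fin] unfolding dn_def by auto
    then have "(\<Sum>x\<in>A \<union> B. ?g x) = (\<Sum>x\<in>A. e x) + 1 + (\<Sum>x\<in>B. f x)"
      using sumsplit[of "Max (A \<union> B)"] dnU[of "Max (A \<union> B)"] l by simp
    then show ?thesis using sA sB cA cB card_Un_disjoint[OF finA finB dj] by simp
  qed
  have pre: "card (dn (A \<union> B) t) \<le> (\<Sum>c\<in>dn (A \<union> B) t. ?g c)" if t: "t < Max (A \<union> B)" for t
  proof -
    have GA: "card (dn A t) \<le> (\<Sum>c\<in>dn A t. e c) + 1" using dyck_G[OF dA] .
    have GB: "card (dn B t) \<le> (\<Sum>c\<in>dn B t. f c) + 1" using dyck_G[OF dB] .
    show ?thesis
    proof (cases "t < l")
      case True
      have "dn B t = {}" using l True unfolding dn_def by fastforce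
      moreover have "t < Max A" using True Max_ge[OF finA l(1)] by simp
      moreover have "l \<notin> dn A t" using True unfolding dn_def by simp
      moreover have "card (dn A t) \<le> (\<Sum>c\<in>dn A t. e c)" using dA \<open>t < Max A\<close> unfolding dyck_alt by blast
      ultimately show ?thesis using cardU[of t] sumsplit[of t] dnU[of t] by simp
    next
      case False
      then have lin: "l \<in> dn A t" using l unfolding dn_def by simp
      show ?thesis
      proof (cases "t < Max B")
        case True
        then have "card (dn B t) \<le> (\<Sum>c\<in>dn B t. f c)" using dB unfolding dyck_alt by blast
        then show ?thesis using GA lin using cardU[of t] sumsplit[of t] dnU[of t] by simp
      next
        case False
        have "\<forall>c\<in>B. c \<le> t" using False Max_ge[OF finB] by (meson le_trans not_less)
        then have "dn B t = B" unfolding dn_def by auto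
        moreover have "Max (A \<union> B) = max (Max A) (Max B)" using finA finB neA neB by (simp add: Max_Un)
        ultimately have "t < Max A" using t False by auto
        then have "card (dn A t) \<le> (\<Sum>c\<in>dn A t. e c)" using dA unfolding dyck_alt by blast
        moreover have "card B = (\<Sum>c\<in>B. f c) + 1" using sB cB by simp
        ultimately show ?thesis using \<open>dn B t = B\<close> lin using cardU[of t] sumsplit[of t] dnU[of t] by simp
      qed
    qed
  qed
  show ?thesis unfolding dyck_alt using fin neA zero tot pre by blast
qed

definition FR :: "nat set \<Rightarrow> (nat \<Rightarrow> nat) \<Rightarrow> nat \<Rightarrow> nat set" where
  "FR S e a = {x\<in>S. a < x \<and> x \<le> (LEAST r. r \<in> S \<and> a < r \<and>
      card {x\<in>S. a < x \<and> x \<le> r} = (\<Sum>x\<in>{x\<in>S. a < x \<and> x \<le> r}. e x) + 1)}"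

lemma fr_unique:
  assumes dB: "dyck B f" and fin: "finite A" and dj: "A \<inter> B = {}" and a: "a \<in> A" "\<forall>b\<in>B. a < b"
    and gapA: "\<forall>x\<in>A. x \<le> a \<or> (\<forall>b\<in>B. b < x)" and ef: "\<forall>x\<in>B. e x = f x"
  shows "FR (A \<union> B) e a = B"
proof -
  have finB: "finite B" and neB: "B \<noteq> {}" and sB: "(\<Sum>b\<in>B. f b) = card B - 1"
    using dB unfolding dyck_def by auto
  have cB: "card B \<ge> 1" using finB neB by (simp add: Suc_le_eq card_gt_0_iff)
  let ?P = "\<lambda>r. r \<in> A \<union> B \<and> a < r \<and>
      card {x\<in>A \<union> B. a < x \<and> x \<le> r} = (\<Sum>x\<in>{x\<in>A \<union> B. a < x \<and> x \<le> r}. e x) + 1"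
  have MB: "Max B \<in> B" using Max_in[OF finB neB] .
  have setM: "{x\<in>A \<union> B. a < x \<and> x \<le> Max B} = B"
  proof
    show "{x\<in>A \<union> B. a < x \<and> x \<le> Max B} \<subseteq> B"
    proof
      fix x assume x: "x \<in> {x\<in>A \<union> B. a < x \<and> x \<le> Max B}"
      show "x \<in> B"
      proof (rule ccontr)
        assume "x \<notin> B"
        then have "x \<in> A" using x by blast
        then have "Max B < x" using gapA x MB by force
        then show False using x by simp
      qed
    qed
    show "B \<subseteq> {x\<in>A \<union> B. a < x \<and> x \<le> Max B}" using a(2) Max_ge[OF finB] by auto
  qed
  have PM: "?P (Max B)"
  proof -
    have "(\<Sum>x\<in>B. e x) = (\<Sum>x\<in>B. f x)" using ef by (intro sum.cong) auto
    then show ?thesis unfolding setM using MB a(2) sB cB by auto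
  qed
  have least: "Max B \<le> r" if r: "?P r" for r
  proof (rule ccontr)
    assume "\<not> Max B \<le> r"
    then have rl: "r < Max B" by simp
    have "r \<notin> A"
    proof
      assume "r \<in> A" then have "Max B < r" using gapA r MB by force
      then show False using rl by simp
    qed
    then have rB: "r \<in> B" using r by blast
    have eqs: "{x\<in>A \<union> B. a < x \<and> x \<le> r} = dn B r"
    proof
      show "{x\<in>A \<union> B. a < x \<and> x \<le> r} \<subseteq> dn B r"
      proof
        fix x assume x: "x \<in> {x\<in>A \<union> B. a < x \<and> x \<le> r}"
        have "x \<notin> A"
        proof
          assume "x \<in> A" then have "Max B < x" using gapA x MB by force
          then show False using x rl by simp
        qed
        then show "x \<in> dn B r" using x unfolding dn_def by auto
      qed
      show "dn B r \<subseteq> {x\<in>A \<union> B. a < x \<and> x \<le> r}" using a(2) unfolding dn_def by auto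
    qed
    have "(\<Sum>x\<in>dn B r. e x) = (\<Sum>x\<in>dn B r. f x)" using ef by (intro sum.cong) (auto simp: dn_def)
    moreover have "card (dn B r) \<le> (\<Sum>x\<in>dn B r. f x)" using dB rl unfolding dyck_alt by blast
    ultimately show False using r unfolding eqs by simp
  qed
  have "(LEAST r. ?P r) = Max B" using Least_equality[of ?P "Max B"] PM least by blast
  then show ?thesis unfolding FR_def using setM by simp
qed

lemma dyck_split:
  assumes d: "dyck S e" and c2: "card S \<ge> 2"
  shows "\<exists>a b. a \<in> S \<and> b \<in> S \<and> a < b \<and> (\<forall>z\<in>S. \<not> (a < z \<and> z < b)) \<and> e b = 0 \<and> 1 \<le> e a \<and>
     dyck (S - {b}) (e(a := e a - 1))"
proof -
  have fin: "finite S" and ne: "S \<noteq> {}" and z: "\<forall>x. x \<notin> S \<longrightarrow> e x = 0"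
    and sS: "(\<Sum>b\<in>S. e b) = card S - 1" and pre: "\<forall>t. t < Max S \<longrightarrow> card (dn S t) \<le> (\<Sum>c\<in>dn S t. e c)"
    using d unfolding dyck_alt by auto
  have MS: "Max S \<in> S" using Max_in[OF fin ne] .
  have mS: "Min S \<in> S" using Min_in[OF fin ne] .
  have mlt: "Min S < Max S"
  proof -
    have "\<not> card S \<le> Suc 0" using c2 by simp
    then obtain x y where "x \<in> S" "y \<in> S" "x \<noteq> y" using card_le_Suc0_iff_eq[OF fin] by blast
    moreover have "Min S \<le> x" "x \<le> Max S" "Min S \<le> y" "y \<le> Max S"
      using Min_le[OF fin] Max_ge[OF fin] calculation by auto
    ultimately show ?thesis by arith
  qed
  have "dn S (Min S) = {Min S}" using Min_le[OF fin] mS unfolding dn_def by fastforce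
  then have em: "1 \<le> e (Min S)" using pre mlt by fastforce
  define T where "T = {x\<in>S. 1 \<le> e x}"
  have finT: "finite T" "T \<noteq> {}" using fin mS em unfolding T_def by auto
  define a where "a = Max T"
  have aT: "a \<in> T" unfolding a_def using Max_in[OF finT] .
  have aS: "a \<in> S" and ea: "1 \<le> e a" using aT unfolding T_def by auto
  have above: "e x = 0" if "x \<in> S" "a < x" for x
  proof (rule ccontr)
    assume "e x \<noteq> 0" then have "x \<in> T" using that unfolding T_def by auto
    then show False using Max_ge[OF finT(1)] that(2) unfolding a_def by fastforce
  qed
  have eM: "e (Max S) = 0"
  proof -
    have "dn S (Max S - 1) = S - {Max S}" using Max_ge[OF fin] mlt unfolding dn_def by fastforce
    moreover have "Max S - 1 < Max S" using mlt by simp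
    ultimately have "card (S - {Max S}) \<le> (\<Sum>c\<in>S - {Max S}. e c)" using pre by metis
    moreover have "(\<Sum>c\<in>S - {Max S}. e c) = (\<Sum>c\<in>S. e c) - e (Max S)"
      using sum_diff1_nat[of e S "Max S"] MS by simp
    moreover have "card (S - {Max S}) = card S - 1" using MS fin by simp
    moreover have "e (Max S) \<le> sum e S" by (rule member_le_sum) (use MS fin in auto)
    ultimately show ?thesis using sS c2 by linarith
  qed
  have aM: "a < Max S"
  proof -
    have "a \<noteq> Max S" using eM ea by auto
    then show ?thesis using Max_ge[OF fin aS] by simp
  qed
  define U where "U = {z\<in>S. a < z}"
  have finU: "finite U" "U \<noteq> {}" using fin MS aM unfolding U_def by auto
  define b where "b = Min U"
  have bU: "b \<in> U" unfolding b_def using Min_in[OF finU] .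
  have bS: "b \<in> S" and ab: "a < b" using bU unfolding U_def by auto
  have gap: "\<forall>z\<in>S. \<not> (a < z \<and> z < b)" using Min_le[OF finU(1)] unfolding b_def U_def by fastforce
  have eb: "e b = 0" using above bS ab by simp
  define e' where "e' = e(a := e a - 1)"
  let ?S = "S - {b}"
  have fin': "finite ?S" using fin by simp
  have ne': "?S \<noteq> {}" using aS ab by auto
  have z': "\<forall>x. x \<notin> ?S \<longrightarrow> e' x = 0" using z eb ab aS unfolding e'_def by auto
  have sumS': "(\<Sum>x\<in>?S. e' x) = (\<Sum>x\<in>?S. e x) - 1"
  proof -
    have aS': "a \<in> ?S" using aS ab by auto
    have "(\<Sum>x\<in>?S. e' x) = e' a + (\<Sum>x\<in>?S - {a}. e' x)" using sum.remove[OF fin' aS'] by simp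
    moreover have "(\<Sum>x\<in>?S - {a}. e' x) = (\<Sum>x\<in>?S - {a}. e x)" unfolding e'_def by (intro sum.cong) auto
    moreover have "(\<Sum>x\<in>?S. e x) = e a + (\<Sum>x\<in>?S - {a}. e x)" using sum.remove[OF fin' aS'] by simp
    ultimately show ?thesis unfolding e'_def using ea by simp
  qed
  have sumSb: "(\<Sum>x\<in>?S. e x) = (\<Sum>x\<in>S. e x)" using sum_diff1_nat[of e S b] bS eb by simp
  have cardS': "card ?S = card S - 1" using bS fin by simp
  have tot': "(\<Sum>x\<in>?S. e' x) = card ?S - 1" using sumS' sumSb sS cardS' by simp
  have MS': "Max ?S \<in> ?S" using Max_in[OF fin' ne'] .
  have pre': "card (dn ?S t) \<le> (\<Sum>c\<in>dn ?S t. e' c)" if t: "t < Max ?S" for t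
  proof (cases "t < a")
    case True
    have eqd: "dn ?S t = dn S t" using True ab unfolding dn_def by auto
    have "(\<Sum>c\<in>dn S t. e' c) = (\<Sum>c\<in>dn S t. e c)" using True unfolding e'_def dn_def by (intro sum.cong) auto
    moreover have "t < Max S" using True aM by simp
    ultimately show ?thesis using pre eqd by simp
  next
    case False
    have fd: "finite (dn ?S t)" using fin unfolding dn_def by auto
    have ad: "a \<in> dn ?S t" using False aS ab unfolding dn_def by auto
    have "(\<Sum>c\<in>dn ?S t. e c) = (\<Sum>c\<in>?S. e c)"
    proof -
      have "(\<Sum>c\<in>?S. e c) = (\<Sum>c\<in>dn ?S t. e c) + (\<Sum>c\<in>?S - dn ?S t. e c)"
      proof -
        have sub: "dn ?S t \<subseteq> ?S" by (auto simp: dn_def)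
        show ?thesis using sum.subset_diff[OF sub fin', of e] by (simp add: add.commute)
      qed
      moreover have "(\<Sum>c\<in>?S - dn ?S t. e c) = 0"
      proof (rule sum.neutral, rule ballI)
        fix c assume "c \<in> ?S - dn ?S t"
        then have "c \<in> S" "a < c" using False unfolding dn_def by auto
        then show "e c = 0" using above by blast
      qed
      ultimately show ?thesis by simp
    qed
    moreover have "(\<Sum>c\<in>dn ?S t. e' c) = (\<Sum>c\<in>dn ?S t. e c) - 1"
    proof -
      have "(\<Sum>c\<in>dn ?S t. e' c) = e' a + (\<Sum>x\<in>dn ?S t - {a}. e' x)" using sum.remove[OF fd ad] by simp
      moreover have "(\<Sum>x\<in>dn ?S t - {a}. e' x) = (\<Sum>x\<in>dn ?S t - {a}. e x)" unfolding e'_def by (intro sum.cong) auto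
      moreover have "(\<Sum>x\<in>dn ?S t. e x) = e a + (\<Sum>x\<in>dn ?S t - {a}. e x)" using sum.remove[OF fd ad] by simp
      ultimately show ?thesis unfolding e'_def using ea by simp
    qed
    moreover have "card (dn ?S t) \<le> card S - 2"
    proof -
      have "dn ?S t \<subseteq> ?S - {Max ?S}" using t unfolding dn_def by auto
      then have "card (dn ?S t) \<le> card (?S - {Max ?S})" using fin' by (intro card_mono) auto
      also have "\<dots> = card S - 2" using MS' cardS' fin' by simp
      finally show ?thesis .
    qed
    ultimately show ?thesis using sumSb sS by simp
  qed
  have "dyck ?S e'" unfolding dyck_alt using fin' ne' z' tot' pre' by blast
  then show ?thesis using aS bS ab gap eb ea unfolding e'_def by blast
qed


lemma mrg_sym: "mrg \<pi> A B = mrg \<pi> B A" unfolding mrg_def by (simp add: Un_commute insert_commute)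

lemma part_dj: "partition_on S \<pi> \<Longrightarrow> A \<in> \<pi> \<Longrightarrow> B \<in> \<pi> \<Longrightarrow> A \<noteq> B \<Longrightarrow> A \<inter> B = {}"
  using part_block_eq[of S \<pi> A B] by blast

lemma notin_mrg:
  assumes "partition_on S \<pi>" "A \<in> \<pi>" "B \<in> \<pi>" "A \<noteq> B"
  shows "A \<notin> mrg \<pi> A B" "B \<notin> mrg \<pi> A B"
proof -
  have dj: "A \<inter> B = {}" using part_dj assms by blast
  have ne: "A \<noteq> {}" "B \<noteq> {}" using part_nonempty assms by blast+
  show "A \<notin> mrg \<pi> A B" using mrg_cases[of A \<pi> A B] dj ne by blast
  show "B \<notin> mrg \<pi> A B" using mrg_cases[of B \<pi> A B] dj ne by blast
qed

lemma lam_mrg: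
  assumes p: "partition_on S \<pi>" and AB: "A \<in> \<pi>" "B \<in> \<pi>" "A \<noteq> B" and m: "Min A < Min B"
  shows "lamNC \<pi> (mrg \<pi> A B) = Max {x\<in>A. x < Min B}"
proof -
  let ?\<sigma> = "mrg \<pi> A B"
  have nA: "A \<notin> ?\<sigma>" and nB: "B \<notin> ?\<sigma>" using notin_mrg[OF p AB] by auto
  have onlyAB: "X = A \<or> X = B" if "X \<in> \<pi>" "X \<notin> ?\<sigma>" for X using mrg_other[of X \<pi> A B] that by blast
  show ?thesis unfolding lamNC_def
  proof (rule the_equality)
    show "\<exists>Bi\<in>\<pi>. \<exists>Bj\<in>\<pi>. Bi \<notin> ?\<sigma> \<and> Bj \<notin> ?\<sigma> \<and> Bi \<noteq> Bj \<and> Min Bi < Min Bj \<and>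
        Max {x\<in>A. x < Min B} = Max {x\<in>Bi. x < Min Bj}" using AB nA nB m by blast
  next
    fix a assume "\<exists>Bi\<in>\<pi>. \<exists>Bj\<in>\<pi>. Bi \<notin> ?\<sigma> \<and> Bj \<notin> ?\<sigma> \<and> Bi \<noteq> Bj \<and> Min Bi < Min Bj \<and>
        a = Max {x\<in>Bi. x < Min Bj}"
    then obtain Bi Bj where h: "Bi \<in> \<pi>" "Bj \<in> \<pi>" "Bi \<notin> ?\<sigma>" "Bj \<notin> ?\<sigma>" "Bi \<noteq> Bj" "Min Bi < Min Bj"
      "a = Max {x\<in>Bi. x < Min Bj}" by blast
    have "Bi = A \<and> Bj = B" using onlyAB[OF h(1,3)] onlyAB[OF h(2,4)] h(5,6) m by auto
    then show "a = Max {x\<in>A. x < Min B}" using h(7) by simp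
  qed
qed

lemma lam_in:
  assumes "finite A" "A \<noteq> {}" "Min A < Min B"
  shows "Max {x\<in>A. x < Min B} \<in> A" "Max {x\<in>A. x < Min B} < Min B"
proof -
  have "Min A \<in> {x\<in>A. x < Min B}" using Min_in[OF assms(1,2)] assms(3) by simp
  then have ne: "{x\<in>A. x < Min B} \<noteq> {}" by blast
  have f: "finite {x\<in>A. x < Min B}" using assms(1) by simp
  show "Max {x\<in>A. x < Min B} \<in> A" "Max {x\<in>A. x < Min B} < Min B" using Max_in[OF f ne] by auto
qed

lemma mergeable_nc:
  assumes \<pi>: "\<pi> \<in> NC n" and AB: "A \<in> \<pi>" "B \<in> \<pi>" "A \<noteq> B" and m: "Min A < Min B"
  shows "mergeable A B"
proof -
  have p: "partition_on {1..n} \<pi>" using NC_part[OF \<pi>] .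
  have fA: "finite A" "A \<noteq> {}" and fB: "finite B" "B \<noteq> {}"
    using NC_finite_block[OF \<pi>] part_nonempty[OF p] AB by auto
  have dj: "A \<inter> B = {}" using part_dj[OF p AB] .
  have "b < Min B \<or> Max B < b" if b: "b \<in> A" for b
  proof (rule ccontr)
    assume "\<not> (b < Min B \<or> Max B < b)"
    then have "Min B \<le> b" "b \<le> Max B" by auto
    moreover have "b \<noteq> Min B" "b \<noteq> Max B" using dj b Min_in[OF fB] Max_in[OF fB] by auto
    ultimately have "Min B < b" "b < Max B" by auto
    then show False using nc_cross[OF NC_nc[OF \<pi>] AB(1) AB(2) AB(3) m] Min_in[OF fA] Min_in[OF fB] Max_in[OF fB] b
      by blast
  qed
  then show ?thesis unfolding mergeable_def using dj m by blast
qed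

abbreviation SC :: "nat \<Rightarrow> nat set set list set" where
  "SC n \<equiv> sat_chains (NC n) refines (NC_bot n)"

definition labs :: "nat set set list \<Rightarrow> nat list" where
  "labs c = map (\<lambda>i. lamNC (c ! i) (c ! Suc i)) [0..<length c - 1]"

definition cnt :: "nat set set list \<Rightarrow> nat \<Rightarrow> nat" where
  "cnt c x = count (mset (labs c)) x"

definition dy :: "nat set set list \<Rightarrow> nat set \<Rightarrow> nat \<Rightarrow> nat" where
  "dy c B = (\<lambda>x. if x \<in> B then cnt c x else 0)"

definition Phi :: "nat set set list \<Rightarrow> (nat set \<times> (nat \<Rightarrow> nat)) set" where
  "Phi c = (\<lambda>B. (B, dy c B)) ` last c"

lemma labs_snoc: "c \<noteq> [] \<Longrightarrow> labs (c @ [\<sigma>]) = labs c @ [lamNC (last c) \<sigma>]"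
proof -
  assume c: "c \<noteq> []"
  then obtain m where m: "length c = Suc m" by (cases c) auto
  have "[0..<length (c @ [\<sigma>]) - 1] = [0..<m] @ [m]" using m by simp
  moreover have "map (\<lambda>i. lamNC ((c @ [\<sigma>]) ! i) ((c @ [\<sigma>]) ! Suc i)) [0..<m] =
      map (\<lambda>i. lamNC (c ! i) (c ! Suc i)) [0..<m]" using m by (intro map_cong) (auto simp: nth_append)
  moreover have "(c @ [\<sigma>]) ! m = last c" "(c @ [\<sigma>]) ! Suc m = \<sigma>" using m c
    by (auto simp: nth_append last_conv_nth)
  ultimately show ?thesis unfolding labs_def using m by simp
qed

lemma labs_single: "labs [x] = []" unfolding labs_def by simp

lemma length_labs: "length (labs c) = length c - 1" unfolding labs_def by simp

lemma cnt_snoc: "c \<noteq> [] \<Longrightarrow> cnt (c @ [\<sigma>]) x = cnt c x + (if x = lamNC (last c) \<sigma> then 1 else 0)"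
  unfolding cnt_def by (simp add: labs_snoc)

lemma sat_snoc:
  assumes "c \<in> sat_chains P le z" "pcover P le (last c) \<sigma>"
  shows "c @ [\<sigma>] \<in> sat_chains P le z"
proof -
  have c: "c \<noteq> []" "hd c = z" "set c \<subseteq> P" "\<And>i. Suc i < length c \<Longrightarrow> pcover P le (c ! i) (c ! Suc i)"
    using assms(1) unfolding sat_chains_def by auto
  have "\<sigma> \<in> P" using assms(2) unfolding pcover_def by auto
  moreover have "pcover P le ((c @ [\<sigma>]) ! i) ((c @ [\<sigma>]) ! Suc i)" if "Suc i < length (c @ [\<sigma>])" for i
  proof (cases "Suc i < length c")
    case True then show ?thesis using c(4) by (simp add: nth_append)
  next
    case False
    then have i: "Suc i = length c" using that by simp
    then have "i = length c - 1" by simp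
    then show ?thesis using assms(2) c(1) i by (simp add: nth_append last_conv_nth)
  qed
  ultimately show ?thesis using c unfolding sat_chains_def by auto
qed

lemma sat_butlast:
  assumes "c \<in> sat_chains P le z" "length c \<ge> 2"
  shows "butlast c \<in> sat_chains P le z" "pcover P le (last (butlast c)) (last c)" "c = butlast c @ [last c]"
proof -
  have c: "c \<noteq> []" "hd c = z" "set c \<subseteq> P" "\<And>i. Suc i < length c \<Longrightarrow> pcover P le (c ! i) (c ! Suc i)"
    using assms(1) unfolding sat_chains_def by auto
  show e: "c = butlast c @ [last c]" using c(1) by simp
  obtain m where m: "length c = Suc (Suc m)" using assms(2) by (metis add_2_eq_Suc le_Suc_ex)
  have bl: "length (butlast c) = Suc m" using m by simp
  then have bl: "butlast c \<noteq> []" "length (butlast c) = Suc m" by (metis Zero_not_Suc list.size(3))+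
  show "butlast c \<in> sat_chains P le z"
    unfolding sat_chains_def
  proof (intro CollectI conjI allI impI)
    show "butlast c \<noteq> []" using bl by simp
    show "hd (butlast c) = z" using c(2) bl by (metis e hd_append2)
    show "set (butlast c) \<subseteq> P" using c(3) by (meson in_set_butlastD subset_iff)
    fix i assume "Suc i < length (butlast c)"
    then show "pcover P le (butlast c ! i) (butlast c ! Suc i)" using c(4)[of i] bl m by (simp add: nth_butlast)
  qed
  show "pcover P le (last (butlast c)) (last c)"
    using c(4)[of m] m bl c(1) by (simp add: last_conv_nth nth_butlast)
qed

lemma sat_single: "[x] \<in> sat_chains P le z \<longleftrightarrow> x = z \<and> x \<in> P"
  unfolding sat_chains_def by auto

lemma NC_bot_NC: "NC_bot n \<in> NC n"
proof -
  have "partition_on {1..n} (NC_bot n)" unfolding NC_bot_def by (rule partition_on_singletons)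
  moreover have "noncrossing (NC_bot n)" unfolding noncrossing_def NC_bot_def by auto
  ultimately show ?thesis unfolding NC_def by blast
qed

lemma Phi_snoc:
  assumes c: "c \<noteq> []" and p: "partition_on S (last c)" and AB: "A \<in> last c" "B \<in> last c" "A \<noteq> B"
    and m: "Min A < Min B" and fA: "finite A"
  shows "Phi (c @ [mrg (last c) A B]) = insert (dyck_merge A (dy c A) B (dy c B)) (Phi c - {(A, dy c A), (B, dy c B)})"
proof -
  let ?\<pi> = "last c" let ?\<sigma> = "mrg ?\<pi> A B" let ?l = "Max {x\<in>A. x < Min B}"
  have neA: "A \<noteq> {}" using part_nonempty[OF p AB(1)] .
  have l: "?l \<in> A" "?l < Min B" using lam_in[OF fA neA m] by auto
  have dj: "A \<inter> B = {}" using part_dj[OF p AB] .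
  have lam: "lamNC ?\<pi> ?\<sigma> = ?l" using lam_mrg[OF p AB m] .
  have cnt': "cnt (c @ [?\<sigma>]) x = cnt c x + (if x = ?l then 1 else 0)" for x using cnt_snoc[OF c] lam by simp
  have dyE: "dy (c @ [?\<sigma>]) E = dy c E" if "E \<in> ?\<pi>" "E \<noteq> A" for E
  proof -
    have "?l \<notin> E" using part_dj[OF p that(1) AB(1) that(2)] l(1) by blast
    then show ?thesis unfolding dy_def using cnt' by auto
  qed
  have dyU: "(A \<union> B, dy (c @ [?\<sigma>]) (A \<union> B)) = dyck_merge A (dy c A) B (dy c B)"
    unfolding dyck_merge_def dy_def using cnt' dj l by (auto intro!: ext)
  have "Phi (c @ [?\<sigma>]) = (\<lambda>E. (E, dy (c @ [?\<sigma>]) E)) ` ?\<sigma>" unfolding Phi_def by simp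
  also have "\<dots> = insert (A \<union> B, dy (c @ [?\<sigma>]) (A \<union> B)) ((\<lambda>E. (E, dy (c @ [?\<sigma>]) E)) ` (?\<pi> - {A, B}))"
    unfolding mrg_def by simp
  also have "(\<lambda>E. (E, dy (c @ [?\<sigma>]) E)) ` (?\<pi> - {A, B}) = (\<lambda>E. (E, dy c E)) ` (?\<pi> - {A, B})"
    using dyE by (intro image_cong) auto
  also have "\<dots> = Phi c - {(A, dy c A), (B, dy c B)}" unfolding Phi_def by auto
  finally show ?thesis using dyU by simp
qed


lemma chain_decomp:
  assumes "c \<in> SC n" "length c \<ge> 2"
  shows "\<exists>c0 A B. c0 \<in> SC n \<and> c = c0 @ [mrg (last c0) A B] \<and> A \<in> last c0 \<and> B \<in> last c0 \<and> A \<noteq> B \<and>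
     Min A < Min B \<and> last c0 \<in> NC n \<and> mrg (last c0) A B \<in> NC n"
proof -
  have c0: "butlast c \<in> SC n" and cov: "pcover (NC n) refines (last (butlast c)) (last c)"
    and ce: "c = butlast c @ [last c]" using sat_butlast[OF assms] by auto
  let ?c0 = "butlast c"
  have \<pi>: "last ?c0 \<in> NC n" and \<sigma>: "last c \<in> NC n" using cov unfolding pcover_def by auto
  obtain A B where AB: "A \<in> last ?c0" "B \<in> last ?c0" "A \<noteq> B" "last c = mrg (last ?c0) A B"
    using cover_mrg[OF cov] by blast
  have p: "partition_on {1..n} (last ?c0)" using NC_part[OF \<pi>] .
  have "Min A \<noteq> Min B"
  proof
    assume "Min A = Min B"
    moreover have "Min A \<in> A" "Min B \<in> B" using Min_in NC_finite_block[OF \<pi>] part_nonempty[OF p] AB by auto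
    ultimately show False using part_dj[OF p AB(1-3)] by auto
  qed
  then consider "Min A < Min B" | "Min B < Min A" by linarith
  then show ?thesis
  proof cases
    case 1 then show ?thesis using c0 ce AB \<pi> \<sigma> by metis
  next
    case 2 then show ?thesis using c0 ce AB \<pi> \<sigma> mrg_sym by metis
  qed
qed

lemma cnt_single: "cnt [x] y = 0" unfolding cnt_def labs_def by simp

lemma dyck_single: "dyck {i} (\<lambda>x. 0)" unfolding dyck_def by simp

lemma Phi_single: "Phi [x] = (\<lambda>B. (B, \<lambda>y. 0)) ` x"
  unfolding Phi_def dy_def cnt_single by simp

lemma chain_inv:
  assumes "c \<in> SC n"
  shows "last c \<in> NC n \<and> (\<forall>(B, g)\<in>Phi c. dyck B g) \<and> set (labs c) \<subseteq> {1..n}"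
  using assms
proof (induction "length c" arbitrary: c rule: less_induct)
  case less
  show ?case
  proof (cases "length c \<ge> 2")
    case False
    have "c \<noteq> []" using less.prems unfolding sat_chains_def by blast
    then have "length c \<noteq> 0" by simp
    then have "length c = 1" using False by linarith
    then obtain x where c: "c = [x]" by (cases c) auto
    have "[x] \<in> SC n" using less.prems c by simp
    then have x: "x = NC_bot n" unfolding sat_single by simp
    have "\<forall>(B, g)\<in>Phi c. dyck B g" unfolding c Phi_single x NC_bot_def using dyck_single by auto
    then show ?thesis using c x NC_bot_NC labs_single by simp
  next
    case True
    obtain c0 A B where d: "c0 \<in> SC n" "c = c0 @ [mrg (last c0) A B]" "A \<in> last c0" "B \<in> last c0" "A \<noteq> B"
      "Min A < Min B" "last c0 \<in> NC n" "mrg (last c0) A B \<in> NC n" using chain_decomp[OF less.prems True] by blast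
    have lc0: "length c0 < length c" using d(2) by simp
    have IH: "last c0 \<in> NC n" "\<forall>(B, g)\<in>Phi c0. dyck B g" "set (labs c0) \<subseteq> {1..n}" using less.hyps[OF lc0 d(1)] by auto
    have c0ne: "c0 \<noteq> []" using d(1) unfolding sat_chains_def by auto
    have p: "partition_on {1..n} (last c0)" using NC_part[OF d(7)] .
    have fA: "finite A" using NC_finite_block[OF d(7) d(3)] .
    have neA: "A \<noteq> {}" using part_nonempty[OF p d(3)] .
    have ph: "Phi c = insert (dyck_merge A (dy c0 A) B (dy c0 B)) (Phi c0 - {(A, dy c0 A), (B, dy c0 B)})"
      using Phi_snoc[OF c0ne p d(3-6) fA] d(2) by simp
    have dA: "dyck A (dy c0 A)" and dB: "dyck B (dy c0 B)" using IH(2) d(3,4) unfolding Phi_def by auto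
    have l: "Max {x\<in>A. x < Min B} \<in> A" "Max {x\<in>A. x < Min B} < Min B" using lam_in[OF fA neA d(6)] by auto
    have fB: "finite B" "B \<noteq> {}" using NC_finite_block[OF d(7) d(4)] part_nonempty[OF p d(4)] by auto
    have lB: "\<forall>b\<in>B. Max {x\<in>A. x < Min B} < b" using l(2) Min_le[OF fB(1)] by fastforce
    have "dyck (fst (dyck_merge A (dy c0 A) B (dy c0 B))) (snd (dyck_merge A (dy c0 A) B (dy c0 B)))"
      unfolding dyck_merge_def using dyck_merge_ok[OF dA dB part_dj[OF p d(3-5)] l(1) lB] by simp
    then have g2: "\<forall>(B, g)\<in>Phi c. dyck B g" using IH(2) unfolding ph by auto
    have "labs c = labs c0 @ [lamNC (last c0) (mrg (last c0) A B)]" using labs_snoc[OF c0ne] d(2) by simp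
    moreover have "lamNC (last c0) (mrg (last c0) A B) = Max {x\<in>A. x < Min B}" using lam_mrg[OF p d(3-6)] .
    moreover have "A \<subseteq> {1..n}" using part_sub[OF p d(3)] .
    ultimately have "set (labs c) \<subseteq> {1..n}" using IH(3) l(1) by auto
    then show ?thesis using g2 d(2,8) by simp
  qed
qed

lemma Phi_NCDyck:
  assumes "c \<in> SC n"
  shows "Phi c \<in> NCDyck n"
proof -
  have "inj_on fst (Phi c)" unfolding Phi_def by (auto simp: inj_on_def)
  moreover have "fst ` Phi c = last c" unfolding Phi_def by force
  ultimately show ?thesis using chain_inv[OF assms] unfolding NCDyck_def by auto
qed

lemma fst_Phi: "fst ` Phi c = last c" unfolding Phi_def by force

lemma cnt_out:
  assumes "c \<in> SC n" "x \<notin> {1..n}"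
  shows "cnt c x = 0"
  using chain_inv[OF assms(1)] assms(2) unfolding cnt_def by (auto simp: count_eq_zero_iff)

lemma Phi_eq:
  assumes c: "c \<in> SC n" and d: "d \<in> SC n" and e: "Phi c = Phi d"
  shows "last c = last d" "cnt c = cnt d"
proof -
  show l: "last c = last d" using fst_Phi[of c] fst_Phi[of d] e by simp
  have p: "partition_on {1..n} (last c)" using NC_part chain_inv[OF c] by blast
  show "cnt c = cnt d"
  proof
    fix x
    show "cnt c x = cnt d x"
    proof (cases "x \<in> {1..n}")
      case True
      then obtain B where B: "B \<in> last c" "x \<in> B" using part_ex[OF p] by blast
      then have "(B, dy c B) \<in> Phi d" using e unfolding Phi_def by auto
      then have "dy c B = dy d B" unfolding Phi_def by auto
      then show ?thesis using B(2) unfolding dy_def by meson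
    next
      case False then show ?thesis using cnt_out c d by simp
    qed
  qed
qed

lemma step_merge:
  assumes "c \<in> SC n" "length c \<ge> 2"
  shows "merge_step n (Phi (butlast c)) (Phi c)"
proof -
  obtain c0 A B where d: "c0 \<in> SC n" "c = c0 @ [mrg (last c0) A B]" "A \<in> last c0" "B \<in> last c0" "A \<noteq> B"
      "Min A < Min B" "last c0 \<in> NC n" "mrg (last c0) A B \<in> NC n" using chain_decomp[OF assms] by blast
  have c0ne: "c0 \<noteq> []" using d(1) unfolding sat_chains_def by auto
  have p: "partition_on {1..n} (last c0)" using NC_part[OF d(7)] .
  have fA: "finite A" using NC_finite_block[OF d(7) d(3)] .
  have ph: "Phi c = insert (dyck_merge A (dy c0 A) B (dy c0 B)) (Phi c0 - {(A, dy c0 A), (B, dy c0 B)})"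
    using Phi_snoc[OF c0ne p d(3-6) fA] d(2) by simp
  have "butlast c = c0" using d(2) by simp
  moreover have "(A, dy c0 A) \<in> Phi c0" "(B, dy c0 B) \<in> Phi c0" using d(3,4) unfolding Phi_def by auto
  moreover have "mergeable A B" using mergeable_nc[OF d(7) d(3-6)] .
  ultimately show ?thesis unfolding merge_step_def using Phi_NCDyck[OF d(1)] Phi_NCDyck[OF assms(1)] ph d(5) by blast
qed

lemma prefix_le:
  assumes "c \<in> SC n" "d \<in> SC n" "prefix c d"
  shows "NCDyck_le n (Phi c) (Phi d)"
proof -
  obtain zs where d: "d = c @ zs" using assms(3) prefixE by blast
  have cne: "c \<noteq> []" using assms(1) unfolding sat_chains_def by auto
  have "c @ zs \<in> SC n \<Longrightarrow> NCDyck_le n (Phi c) (Phi (c @ zs))"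
  proof (induction zs rule: rev_induct)
    case Nil then show ?case unfolding NCDyck_le_def by simp
  next
    case (snoc z zs)
    have len: "length (c @ zs @ [z]) \<ge> 2" using cne by (cases c) auto
    have "butlast (c @ zs @ [z]) = c @ zs" by (simp add: butlast_append)
    then have b: "c @ zs \<in> SC n" using sat_butlast(1)[OF snoc.prems[simplified] len] by simp
    have "merge_step n (Phi (c @ zs)) (Phi (c @ zs @ [z]))"
      using step_merge[OF snoc.prems[simplified] len] \<open>butlast _ = _\<close> by simp
    then show ?case using snoc.IH[OF b] unfolding NCDyck_le_def by (simp add: rtrancl.rtrancl_into_rtrancl)
  qed
  then show ?thesis using assms(2) d by simp
qed

lemma merge_lift:
  assumes c: "c \<in> SC n" and ms: "merge_step n (Phi c) F'"
  shows "\<exists>\<sigma>. c @ [\<sigma>] \<in> SC n \<and> Phi (c @ [\<sigma>]) = F'"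
proof -
  obtain B e C f where h: "(B, e) \<in> Phi c" "(C, f) \<in> Phi c" "(B, e) \<noteq> (C, f)" "mergeable B C"
    "F' = insert (dyck_merge B e C f) (Phi c - {(B, e), (C, f)})" and F': "F' \<in> NCDyck n"
    using ms unfolding merge_step_def by blast
  have B: "B \<in> last c" "e = dy c B" and C: "C \<in> last c" "f = dy c C" using h(1,2) unfolding Phi_def by auto
  have BC: "B \<noteq> C" using h(3) B C by auto
  have \<pi>: "last c \<in> NC n" using chain_inv[OF c] by blast
  have p: "partition_on {1..n} (last c)" using NC_part[OF \<pi>] .
  have m: "Min B < Min C" using h(4) unfolding mergeable_def by blast
  have "fst ` F' = mrg (last c) B C"
  proof -
    have "fst ` F' = insert (B \<union> C) (fst ` (Phi c - {(B, e), (C, f)}))" unfolding h(5) dyck_merge_def by simp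
    also have "fst ` (Phi c - {(B, e), (C, f)}) = last c - {B, C}" unfolding Phi_def B C by force
    finally show ?thesis unfolding mrg_def .
  qed
  then have \<sigma>: "mrg (last c) B C \<in> NC n" using F' unfolding NCDyck_def by auto
  have cov: "pcover (NC n) refines (last c) (mrg (last c) B C)" using mrg_cover[OF \<pi> B(1) C(1) BC \<sigma>] .
  have cne: "c \<noteq> []" using c unfolding sat_chains_def by auto
  have "Phi (c @ [mrg (last c) B C]) = F'"
    using Phi_snoc[OF cne p B(1) C(1) BC m NC_finite_block[OF \<pi> B(1)]] h(5) B C by simp
  then show ?thesis using sat_snoc[OF c cov] by blast
qed


lemma no_cross_interval:
  fixes l M :: nat
  assumes "\<forall>u\<in>U. l < u \<and> u \<le> M" "\<forall>v\<in>V. v \<le> l \<or> M < v" "a < b" "b < c" "c < d"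
    "(a \<in> U \<and> c \<in> U \<and> b \<in> V \<and> d \<in> V) \<or> (a \<in> V \<and> c \<in> V \<and> b \<in> U \<and> d \<in> U)"
  shows False
proof -
  from assms(6) show False
  proof
    assume h: "a \<in> U \<and> c \<in> U \<and> b \<in> V \<and> d \<in> V"
    then have "l < a" "c \<le> M" using assms(1) by auto
    moreover have "b \<le> l \<or> M < b" using h assms(2) by auto
    ultimately show False using assms(3-5) by linarith
  next
    assume h: "a \<in> V \<and> c \<in> V \<and> b \<in> U \<and> d \<in> U"
    then have "l < b" "d \<le> M" using assms(1) by auto
    moreover have "c \<le> l \<or> M < c" using h assms(2) by auto
    ultimately show False using assms(3-5) by linarith
  qed
qed

lemma mrg_NC_crit:
  assumes \<pi>: "\<pi> \<in> NC n" and PQ: "P \<in> \<pi>" "Q \<in> \<pi>" "P \<noteq> Q" and \<rho>: "\<rho> \<in> NC n"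
    and H: "\<And>E. E \<in> \<pi> \<Longrightarrow> E \<noteq> P \<Longrightarrow> E \<noteq> Q \<Longrightarrow>
      (\<exists>R1\<in>\<rho>. \<exists>R2\<in>\<rho>. R1 \<noteq> R2 \<and> P \<union> Q \<subseteq> R1 \<and> E \<subseteq> R2) \<or>
      (\<forall>a b c d. a < b \<longrightarrow> b < c \<longrightarrow> c < d \<longrightarrow>
         \<not> ((a \<in> P \<union> Q \<and> c \<in> P \<union> Q \<and> b \<in> E \<and> d \<in> E) \<or> (a \<in> E \<and> c \<in> E \<and> b \<in> P \<union> Q \<and> d \<in> P \<union> Q)))"
  shows "mrg \<pi> P Q \<in> NC n"
proof -
  have p: "partition_on {1..n} \<pi>" using NC_part[OF \<pi>] .
  have pt: "partition_on {1..n} (mrg \<pi> P Q)" using part_mrg[OF p PQ] .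
  have core: False if E: "E \<in> \<pi>" "E \<noteq> P" "E \<noteq> Q" and abcd: "a < b" "b < c" "c < d"
      and cs: "(a \<in> P \<union> Q \<and> c \<in> P \<union> Q \<and> b \<in> E \<and> d \<in> E) \<or> (a \<in> E \<and> c \<in> E \<and> b \<in> P \<union> Q \<and> d \<in> P \<union> Q)"
      for E a b c d
  proof -
    from H[OF E] show False
    proof
      assume "\<exists>R1\<in>\<rho>. \<exists>R2\<in>\<rho>. R1 \<noteq> R2 \<and> P \<union> Q \<subseteq> R1 \<and> E \<subseteq> R2"
      then obtain R1 R2 where R: "R1 \<in> \<rho>" "R2 \<in> \<rho>" "R1 \<noteq> R2" "P \<union> Q \<subseteq> R1" "E \<subseteq> R2" by blast
      from cs show False
      proof
        assume "a \<in> P \<union> Q \<and> c \<in> P \<union> Q \<and> b \<in> E \<and> d \<in> E"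
        then show False using nc_cross[OF NC_nc[OF \<rho>] R(1,2,3) abcd] R(4,5) by blast
      next
        assume "a \<in> E \<and> c \<in> E \<and> b \<in> P \<union> Q \<and> d \<in> P \<union> Q"
        then show False using nc_cross[OF NC_nc[OF \<rho>] R(2,1) R(3)[symmetric] abcd] R(4,5) by blast
      qed
    next
      assume "\<forall>a b c d. a < b \<longrightarrow> b < c \<longrightarrow> c < d \<longrightarrow>
         \<not> ((a \<in> P \<union> Q \<and> c \<in> P \<union> Q \<and> b \<in> E \<and> d \<in> E) \<or> (a \<in> E \<and> c \<in> E \<and> b \<in> P \<union> Q \<and> d \<in> P \<union> Q))"
      then show False using abcd cs by blast
    qed
  qed
  have nct: "noncrossing (mrg \<pi> P Q)"
    unfolding noncrossing_def
  proof (clarify)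
    fix a b c d X Y assume h: "a < b" "b < c" "c < d" "X \<in> mrg \<pi> P Q" "Y \<in> mrg \<pi> P Q" "X \<noteq> Y"
      "a \<in> X" "c \<in> X" "b \<in> Y" "d \<in> Y"
    from mrg_cases[OF h(4)] mrg_cases[OF h(5)]
    show False
    proof (elim disjE)
      assume "X = P \<union> Q" "Y = P \<union> Q" then show False using h by simp
    next
      assume "X = P \<union> Q" "Y \<in> \<pi> \<and> Y \<noteq> P \<and> Y \<noteq> Q"
      then show False using core[of Y a b c d] h by blast
    next
      assume "X \<in> \<pi> \<and> X \<noteq> P \<and> X \<noteq> Q" "Y = P \<union> Q"
      then show False using core[of X a b c d] h by blast
    next
      assume "X \<in> \<pi> \<and> X \<noteq> P \<and> X \<noteq> Q" "Y \<in> \<pi> \<and> Y \<noteq> P \<and> Y \<noteq> Q"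
      then show False using nc_cross[OF NC_nc[OF \<pi>], of X Y a b c d] h by blast
    qed
  qed
  show ?thesis using pt nct unfolding NC_def by blast
qed

lemma G0:
  fixes A B X Y :: "nat set" and \<pi> :: "nat set set"
  assumes "A \<union> B \<noteq> X" "A \<union> B \<noteq> Y" "X \<union> Y \<noteq> A" "X \<union> Y \<noteq> B"
  shows "insert (X \<union> Y) (insert (A \<union> B) (\<pi> - {A, B}) - {X, Y}) = insert (A \<union> B) (insert (X \<union> Y) (\<pi> - {X, Y}) - {A, B})"
proof -
  have "insert (A \<union> B) (\<pi> - {A, B}) - {X, Y} = insert (A \<union> B) (\<pi> - {A, B} - {X, Y})"
    using assms(1,2) by (simp add: insert_Diff_if)
  moreover have "insert (X \<union> Y) (\<pi> - {X, Y}) - {A, B} = insert (X \<union> Y) (\<pi> - {X, Y} - {A, B})"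
    using assms(3,4) by (simp add: insert_Diff_if)
  moreover have "\<pi> - {A, B} - {X, Y} = \<pi> - {X, Y} - {A, B}" by (simp add: Diff_eq Int_ac)
  ultimately show ?thesis by (simp add: insert_commute)
qed

lemma G1:
  fixes A B Y :: "nat set" and \<pi> :: "nat set set"
  assumes "A \<union> B \<notin> \<pi>"
  shows "insert (A \<union> B \<union> Y) (insert (A \<union> B) (\<pi> - {A, B}) - {A \<union> B, Y}) = insert (A \<union> B \<union> Y) (\<pi> - {A, B, Y})"
proof -
  have "insert (A \<union> B) (\<pi> - {A, B}) - {A \<union> B, Y} = \<pi> - {A, B} - {A \<union> B, Y}" by simp
  also have "\<dots> = \<pi> - {A, B, Y}" using assms by (auto simp: Diff_eq)
  finally show ?thesis by simp
qed
lemma G2: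
  fixes A B Y :: "nat set" and \<pi> :: "nat set set"
  assumes "B \<union> Y \<notin> \<pi>" "A \<noteq> B \<union> Y"
  shows "insert (A \<union> B \<union> Y) (\<pi> - {A, B, Y}) = insert (A \<union> (B \<union> Y)) (insert (B \<union> Y) (\<pi> - {B, Y}) - {A, B \<union> Y})"
proof -
  have "insert (B \<union> Y) (\<pi> - {B, Y}) - {A, B \<union> Y} = \<pi> - {B, Y} - {A, B \<union> Y}" by simp
  also have "\<dots> = \<pi> - {A, B, Y}" using assms by (auto simp: Diff_eq)
  finally show ?thesis by (simp add: Un_assoc)
qed
lemma G3:
  fixes A B Y :: "nat set" and \<pi> :: "nat set set"
  assumes "A \<union> Y \<notin> \<pi>" "A \<union> Y \<noteq> B"
  shows "insert (A \<union> B \<union> Y) (\<pi> - {A, B, Y}) = insert (A \<union> Y \<union> B) (insert (A \<union> Y) (\<pi> - {A, Y}) - {A \<union> Y, B})"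
proof -
  have "insert (A \<union> Y) (\<pi> - {A, Y}) - {A \<union> Y, B} = \<pi> - {A, Y} - {A \<union> Y, B}" by simp
  also have "\<dots> = \<pi> - {A, B, Y}" using assms by (auto simp: Diff_eq)
  finally show ?thesis by (simp add: Un_ac)
qed

lemma rts_core:
  assumes \<pi>: "\<pi> \<in> NC n" and AB: "A \<in> \<pi>" "B \<in> \<pi>" "A \<noteq> B" "Min A < Min B"
    and \<sigma>def: "\<sigma> = mrg \<pi> A B" and \<sigma>: "\<sigma> \<in> NC n"
    and XY: "X \<in> \<sigma>" "Y \<in> \<sigma>" "X \<noteq> Y" "Min X < Min Y"
    and \<rho>def: "\<rho> = mrg \<sigma> X Y" and \<rho>: "\<rho> \<in> NC n"
    and lt: "Max {x\<in>A. x < Min B} < Max {x\<in>X. x < Min Y}"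
  shows "\<exists>x'. pcover (NC n) refines \<pi> x' \<and> pcover (NC n) refines x' \<rho> \<and>
     lamNC \<pi> x' = lamNC \<sigma> \<rho> \<and> lamNC x' \<rho> = lamNC \<pi> \<sigma>"
proof -
  have p: "partition_on {1..n} \<pi>" using NC_part[OF \<pi>] .
  have ps: "partition_on {1..n} \<sigma>" using NC_part[OF \<sigma>] .
  have fin: "\<And>U. U \<in> \<pi> \<Longrightarrow> finite U" using NC_finite_block[OF \<pi>] by blast
  have nem: "\<And>U. U \<in> \<pi> \<Longrightarrow> U \<noteq> {}" using part_nonempty[OF p] by blast
  have dj: "\<And>U V. U \<in> \<pi> \<Longrightarrow> V \<in> \<pi> \<Longrightarrow> U \<noteq> V \<Longrightarrow> U \<inter> V = {}" using part_dj[OF p] by blast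
  have finS: "\<And>U. U \<in> \<sigma> \<Longrightarrow> finite U" using NC_finite_block[OF \<sigma>] by blast
  have nemS: "\<And>U. U \<in> \<sigma> \<Longrightarrow> U \<noteq> {}" using part_nonempty[OF ps] by blast
  define l1 where "l1 = Max {x\<in>A. x < Min B}"
  define l2 where "l2 = Max {x\<in>X. x < Min Y}"
  have lam\<sigma>: "lamNC \<pi> \<sigma> = l1" unfolding l1_def \<sigma>def using lam_mrg[OF p AB] .
  have lam\<rho>: "lamNC \<sigma> \<rho> = l2" unfolding l2_def \<rho>def using lam_mrg[OF ps XY] .
  have l1: "l1 \<in> A" "l1 < Min B" using lam_in[OF fin[OF AB(1)] nem[OF AB(1)] AB(4)] unfolding l1_def by auto
  have l2: "l2 \<in> X" "l2 < Min Y" using lam_in[OF finS[OF XY(1)] nemS[OF XY(1)] XY(4)] unfolding l2_def by auto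
  have l1max: "\<And>x. x \<in> A \<Longrightarrow> x < Min B \<Longrightarrow> x \<le> l1" unfolding l1_def using fin[OF AB(1)] by simp
  have l2max: "\<And>x. x \<in> X \<Longrightarrow> x < Min Y \<Longrightarrow> x \<le> l2" unfolding l2_def using finS[OF XY(1)] by simp
  have mAB: "mergeable A B" using mergeable_nc[OF \<pi> AB] .
  have mXY: "mergeable X Y" using mergeable_nc[OF \<sigma> XY] .
  have AnS: "A \<notin> \<sigma>" "B \<notin> \<sigma>" using notin_mrg[OF p AB(1-3)] \<sigma>def by auto
  have ABnP: "A \<union> B \<notin> \<pi>" using union_notin[OF p AB(1-3)] .
  have ABS: "A \<union> B \<in> \<sigma>" using mrg_in \<sigma>def by metis
  have ne: "A \<noteq> {}" "B \<noteq> {}" using nem AB by auto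
  have fAB: "finite A" "finite B" using fin AB by auto
  have MinAB: "Min (A \<union> B) = Min A" using Min_Un[OF fAB(1) ne(1) fAB(2) ne(2)] AB(4) by simp
  have Xc: "X = A \<union> B \<or> (X \<in> \<pi> \<and> X \<noteq> A \<and> X \<noteq> B)" using mrg_cases XY(1) \<sigma>def by blast
  have Yc: "Y = A \<union> B \<or> (Y \<in> \<pi> \<and> Y \<noteq> A \<and> Y \<noteq> B)" using mrg_cases XY(2) \<sigma>def by blast
  have \<rho>U: "X \<union> Y \<in> \<rho>" using mrg_in \<rho>def by metis
  have inrho: "E \<in> \<rho>" if "E \<in> \<pi>" "E \<noteq> A" "E \<noteq> B" "E \<noteq> X" "E \<noteq> Y" for E
  proof -
    have "E \<in> \<sigma>" using mrg_other[OF that(1-3)] \<sigma>def by simp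
    then show ?thesis using mrg_other[OF _ that(4,5)] \<rho>def by simp
  qed
  consider (i) "X \<in> \<pi>" "X \<noteq> A" "X \<noteq> B" "Y \<in> \<pi>" "Y \<noteq> A" "Y \<noteq> B"
    | (ii) "X = A \<union> B" "Y \<in> \<pi>" "Y \<noteq> A" "Y \<noteq> B"
    | (iii) "Y = A \<union> B"
    using Xc Yc XY(3) by blast
  then show ?thesis
  proof cases
    case iii
    have "Min Y = Min A" using iii MinAB by simp
    moreover have "Min A \<le> l1" using Min_le[OF fAB(1) l1(1)] .
    ultimately show ?thesis using l2(2) lt unfolding l1_def[symmetric] l2_def[symmetric] by linarith
  next
    case i
    define x' where "x' = mrg \<pi> X Y"
    have XYne: "X \<noteq> {}" "Y \<noteq> {}" using nem i by auto
    have ABnXY: "A \<union> B \<noteq> X" "A \<union> B \<noteq> Y" using ABnP i by auto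
    have XYnAB: "X \<union> Y \<noteq> A" "X \<union> Y \<noteq> B" "X \<union> Y \<noteq> A \<union> B"
    proof -
      obtain x where x: "x \<in> X" using XYne by blast
      have "x \<notin> A" "x \<notin> B" using dj[OF i(1) AB(1) i(2)] dj[OF i(1) AB(2) i(3)] x by auto
      then show "X \<union> Y \<noteq> A" "X \<union> Y \<noteq> B" "X \<union> Y \<noteq> A \<union> B" using x by auto
    qed
    have ABrho: "A \<union> B \<in> \<rho>" using mrg_other[OF ABS ABnXY] \<rho>def by simp
    have x'NC: "x' \<in> NC n" unfolding x'_def
    proof (rule mrg_NC_crit[OF \<pi> i(1) i(4) XY(3) \<rho>])
      fix E assume E: "E \<in> \<pi>" "E \<noteq> X" "E \<noteq> Y"
      show "(\<exists>R1\<in>\<rho>. \<exists>R2\<in>\<rho>. R1 \<noteq> R2 \<and> X \<union> Y \<subseteq> R1 \<and> E \<subseteq> R2) \<or>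
          (\<forall>a b c d. a < b \<longrightarrow> b < c \<longrightarrow> c < d \<longrightarrow>
             \<not> ((a \<in> X \<union> Y \<and> c \<in> X \<union> Y \<and> b \<in> E \<and> d \<in> E) \<or> (a \<in> E \<and> c \<in> E \<and> b \<in> X \<union> Y \<and> d \<in> X \<union> Y)))"
      proof (rule disjI1)
        show "\<exists>R1\<in>\<rho>. \<exists>R2\<in>\<rho>. R1 \<noteq> R2 \<and> X \<union> Y \<subseteq> R1 \<and> E \<subseteq> R2"
        proof (cases "E = A \<or> E = B")
          case True
          then have "E \<subseteq> A \<union> B" by blast
          then show ?thesis using \<rho>U ABrho XYnAB(3)
            by (intro bexI[where x="X \<union> Y"] bexI[where x="A \<union> B"]) auto
        next
          case False
          then have "E \<noteq> A" "E \<noteq> B" by auto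
          then have "E \<in> \<rho>" using inrho[OF E(1) _ _ E(2) E(3)] by blast
          moreover have "X \<union> Y \<noteq> E"
          proof
            assume "X \<union> Y = E"
            then have "X \<subseteq> E" by blast
            then show False using dj[OF i(1) E(1) E(2)[symmetric]] XYne(1) by blast
          qed
          ultimately show ?thesis using \<rho>U
            by (intro bexI[where x="X \<union> Y"] bexI[where x="E"]) auto
        qed
      qed
    qed
    have px: "partition_on {1..n} x'" using NC_part[OF x'NC] .
    have \<rho>eq: "\<rho> = mrg x' A B"
      unfolding \<rho>def \<sigma>def x'_def mrg_def using G0[OF ABnXY XYnAB(1,2)] .
    have Ax: "A \<in> x'" "B \<in> x'" unfolding x'_def using mrg_other AB i by metis+
    have c1: "pcover (NC n) refines \<pi> x'" unfolding x'_def using mrg_cover[OF \<pi> i(1) i(4) XY(3)] x'NC x'_def by simp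
    have c2: "pcover (NC n) refines x' \<rho>" using mrg_cover[OF x'NC Ax AB(3)] \<rho> \<rho>eq by simp
    have "lamNC \<pi> x' = l2" unfolding x'_def l2_def using lam_mrg[OF p i(1) i(4) XY(3,4)] .
    moreover have "lamNC x' \<rho> = l1" unfolding \<rho>eq l1_def using lam_mrg[OF px Ax AB(3,4)] .
    ultimately show ?thesis using c1 c2 lam\<sigma> lam\<rho> by metis
  next
    case ii
    have YS: "Y \<noteq> A \<union> B" using ii ABnP by auto
    have neY: "Y \<noteq> {}" "finite Y" using nem fin ii by auto
    have l2AB: "l2 \<in> A \<union> B" using l2 ii by simp
    have mX: "\<forall>z\<in>A \<union> B. z < Min Y \<or> Max Y < z" using mXY ii unfolding mergeable_def by blast
    have mA: "\<forall>a\<in>A. a < Min B \<or> Max B < a" using mAB unfolding mergeable_def by blast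
    have l1lt2: "l1 < l2" using lt unfolding l1_def l2_def .
    have \<rho>form: "\<rho> = insert (A \<union> B \<union> Y) (\<pi> - {A, B, Y})"
      unfolding \<rho>def \<sigma>def mrg_def ii using G1[OF ABnP] .
    have ABYrho: "A \<union> B \<union> Y \<in> \<rho>" using \<rho>form by simp
    have Eother: "E \<in> \<rho>" "E \<noteq> A \<union> B \<union> Y" if E: "E \<in> \<pi>" "E \<noteq> A" "E \<noteq> B" "E \<noteq> Y" for E
    proof -
      show "E \<in> \<rho>" using \<rho>form E by simp
      show "E \<noteq> A \<union> B \<union> Y"
      proof
        assume "E = A \<union> B \<union> Y"
        then have "A \<subseteq> E" by blast
        then show False using dj[OF E(1) AB(1) E(2)] ne(1) by blast
      qed
    qed
    show ?thesis
    proof (cases "l2 \<in> B")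
      case True
      have mBY: "Min B < Min Y" using Min_le[OF fAB(2) True] l2(2) by linarith
      define x' where "x' = mrg \<pi> B Y"
      have MinBY: "Min (B \<union> Y) = Min B" using Min_Un[OF fAB(2) ne(2) neY(2) neY(1)] mBY by simp
      have x'NC: "x' \<in> NC n" unfolding x'_def
      proof (rule mrg_NC_crit[OF \<pi> AB(2) ii(2) ii(4)[symmetric] \<rho>])
        fix E assume E: "E \<in> \<pi>" "E \<noteq> B" "E \<noteq> Y"
        show "(\<exists>R1\<in>\<rho>. \<exists>R2\<in>\<rho>. R1 \<noteq> R2 \<and> B \<union> Y \<subseteq> R1 \<and> E \<subseteq> R2) \<or>
          (\<forall>a b c d. a < b \<longrightarrow> b < c \<longrightarrow> c < d \<longrightarrow>
             \<not> ((a \<in> B \<union> Y \<and> c \<in> B \<union> Y \<and> b \<in> E \<and> d \<in> E) \<or> (a \<in> E \<and> c \<in> E \<and> b \<in> B \<union> Y \<and> d \<in> B \<union> Y)))"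
        proof (cases "E = A")
          case True
          let ?M = "max (Max B) (Max Y)"
          have U: "\<forall>u\<in>B \<union> Y. l1 < u \<and> u \<le> ?M"
          proof
            fix u assume u: "u \<in> B \<union> Y"
            show "l1 < u \<and> u \<le> ?M"
            proof (cases "u \<in> B")
              case True then show ?thesis using Min_le[OF fAB(2) True] Max_ge[OF fAB(2) True] l1(2) by linarith
            next
              case False then have "u \<in> Y" using u by blast
              then show ?thesis using Min_le[OF neY(2)] Max_ge[OF neY(2)] l2(2) Min_le[OF fAB(2) \<open>l2 \<in> B\<close>] l1(2)
                by fastforce
            qed
          qed
          have V: "\<forall>v\<in>A. v \<le> l1 \<or> ?M < v"
          proof
            fix v assume v: "v \<in> A"
            show "v \<le> l1 \<or> ?M < v"
            proof (cases "v < Min B")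
              case True then show ?thesis using l1max v by simp
            next
              case False
              then have vB: "Max B < v" using mA v by blast
              moreover have "l2 \<le> Max B" using Max_ge[OF fAB(2) \<open>l2 \<in> B\<close>] .
              ultimately have "l2 < v" by linarith
              moreover have "v < Min Y \<longrightarrow> v \<le> l2" using l2max v ii(1) by simp
              ultimately have "\<not> v < Min Y" by linarith
              then have "Max Y < v" using mX v by blast
              then show ?thesis using vB by simp
            qed
          qed
          show ?thesis
            apply (rule disjI2)
            using no_cross_interval[OF U] V True by blast
        next
          case False
          show ?thesis
          proof (rule disjI1)
            have "E \<in> \<rho>" "E \<noteq> A \<union> B \<union> Y" using Eother E False by auto
            then show "\<exists>R1\<in>\<rho>. \<exists>R2\<in>\<rho>. R1 \<noteq> R2 \<and> B \<union> Y \<subseteq> R1 \<and> E \<subseteq> R2" using ABYrho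
              by (intro bexI[where x="A \<union> B \<union> Y"] bexI[where x="E"]) auto
          qed
        qed
      qed
      have px: "partition_on {1..n} x'" using NC_part[OF x'NC] .
      have BYnP: "B \<union> Y \<notin> \<pi>" using union_notin[OF p AB(2) ii(2) ii(4)[symmetric]] .
      have AnBY: "A \<noteq> B \<union> Y" using BYnP AB(1) by auto
      have \<rho>eq: "\<rho> = mrg x' A (B \<union> Y)"
        unfolding \<rho>form x'_def mrg_def using G2[OF BYnP AnBY] .
      have Ax: "A \<in> x'" "B \<union> Y \<in> x'" unfolding x'_def using mrg_other AB ii mrg_in by metis+
      have c1: "pcover (NC n) refines \<pi> x'" using mrg_cover[OF \<pi> AB(2) ii(2) ii(4)[symmetric]] x'NC x'_def by simp
      have c2: "pcover (NC n) refines x' \<rho>" using mrg_cover[OF x'NC Ax AnBY] \<rho> \<rho>eq by simp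
      have mA_BY: "Min A < Min (B \<union> Y)" using MinBY AB(4) by simp
      have "lamNC \<pi> x' = Max {x\<in>B. x < Min Y}" unfolding x'_def using lam_mrg[OF p AB(2) ii(2) ii(4)[symmetric] mBY] .
      also have "\<dots> = l2"
      proof (rule Max_eqI)
        show "finite {x\<in>B. x < Min Y}" using fAB(2) by simp
        show "l2 \<in> {x\<in>B. x < Min Y}" using True l2(2) by simp
        fix y assume "y \<in> {x\<in>B. x < Min Y}"
        then show "y \<le> l2" using l2max ii(1) by simp
      qed
      finally have L1: "lamNC \<pi> x' = l2" .
      have "lamNC x' \<rho> = Max {x\<in>A. x < Min (B \<union> Y)}" unfolding \<rho>eq using lam_mrg[OF px Ax AnBY mA_BY] .
      then have L2: "lamNC x' \<rho> = l1" unfolding MinBY l1_def .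
      show ?thesis using c1 c2 L1 L2 lam\<sigma> lam\<rho> by metis
    next
      case False
      then have l2A: "l2 \<in> A" using l2AB by blast
      have l2B: "Max B < l2"
      proof -
        have "\<not> l2 < Min B" using l1max[OF l2A] l1lt2 by fastforce
        then show ?thesis using mA l2A by blast
      qed
      have mAY: "Min A < Min Y" using XY(4) ii MinAB by simp
      define x' where "x' = mrg \<pi> A Y"
      have YgtB: "\<forall>y\<in>Y. Max B < y" using Min_le[OF neY(2)] l2(2) l2B by fastforce
      have MinAY: "Min (A \<union> Y) = Min A" using Min_Un[OF fAB(1) ne(1) neY(2) neY(1)] mAY by simp
      have x'NC: "x' \<in> NC n" unfolding x'_def
      proof (rule mrg_NC_crit[OF \<pi> AB(1) ii(2) ii(3)[symmetric] \<rho>])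
        fix E assume E: "E \<in> \<pi>" "E \<noteq> A" "E \<noteq> Y"
        show "(\<exists>R1\<in>\<rho>. \<exists>R2\<in>\<rho>. R1 \<noteq> R2 \<and> A \<union> Y \<subseteq> R1 \<and> E \<subseteq> R2) \<or>
          (\<forall>a b c d. a < b \<longrightarrow> b < c \<longrightarrow> c < d \<longrightarrow>
             \<not> ((a \<in> A \<union> Y \<and> c \<in> A \<union> Y \<and> b \<in> E \<and> d \<in> E) \<or> (a \<in> E \<and> c \<in> E \<and> b \<in> A \<union> Y \<and> d \<in> A \<union> Y)))"
        proof (cases "E = B")
          case True
          have U: "\<forall>u\<in>B. l1 < u \<and> u \<le> Max B" using Min_le[OF fAB(2)] Max_ge[OF fAB(2)] l1(2) by fastforce
          have V: "\<forall>v\<in>A \<union> Y. v \<le> l1 \<or> Max B < v"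
          proof
            fix v assume v: "v \<in> A \<union> Y"
            show "v \<le> l1 \<or> Max B < v"
            proof (cases "v \<in> A")
              case True then show ?thesis using l1max mA by fastforce
            next
              case False then show ?thesis using v YgtB by blast
            qed
          qed
          show ?thesis
            apply (rule disjI2)
            using no_cross_interval[OF U V] True by blast
        next
          case False
          show ?thesis
          proof (rule disjI1)
            have "E \<in> \<rho>" "E \<noteq> A \<union> B \<union> Y" using Eother E False by auto
            moreover have "A \<union> Y \<subseteq> A \<union> B \<union> Y" by blast
            ultimately show "\<exists>R1\<in>\<rho>. \<exists>R2\<in>\<rho>. R1 \<noteq> R2 \<and> A \<union> Y \<subseteq> R1 \<and> E \<subseteq> R2" using ABYrho
              by (intro bexI[where x="A \<union> B \<union> Y"] bexI[where x="E"]) auto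
          qed
        qed
      qed
      have px: "partition_on {1..n} x'" using NC_part[OF x'NC] .
      have AYnP: "A \<union> Y \<notin> \<pi>" using union_notin[OF p AB(1) ii(2) ii(3)[symmetric]] .
      have AYnB: "A \<union> Y \<noteq> B" using AYnP AB(2) by auto
      have \<rho>eq: "\<rho> = mrg x' (A \<union> Y) B"
        unfolding \<rho>form x'_def mrg_def using G3[OF AYnP AYnB] .
      have Bx: "A \<union> Y \<in> x'" "B \<in> x'" unfolding x'_def using mrg_other AB ii mrg_in by metis+
      have c1: "pcover (NC n) refines \<pi> x'" using mrg_cover[OF \<pi> AB(1) ii(2) ii(3)[symmetric]] x'NC x'_def by simp
      have c2: "pcover (NC n) refines x' \<rho>" using mrg_cover[OF x'NC Bx AYnB] \<rho> \<rho>eq by simp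
      have mAY_B: "Min (A \<union> Y) < Min B" using MinAY AB(4) by simp
      have "lamNC \<pi> x' = Max {x\<in>A. x < Min Y}" unfolding x'_def using lam_mrg[OF p AB(1) ii(2) ii(3)[symmetric] mAY] .
      also have "\<dots> = l2"
      proof (rule Max_eqI)
        show "finite {x\<in>A. x < Min Y}" using fAB(1) by simp
        show "l2 \<in> {x\<in>A. x < Min Y}" using l2A l2(2) by simp
        fix y assume "y \<in> {x\<in>A. x < Min Y}"
        then show "y \<le> l2" using l2max ii(1) by simp
      qed
      finally have L1: "lamNC \<pi> x' = l2" .
      have "lamNC x' \<rho> = Max {x\<in>A \<union> Y. x < Min B}" unfolding \<rho>eq using lam_mrg[OF px Bx AYnB mAY_B] .
      also have "{x\<in>A \<union> Y. x < Min B} = {x\<in>A. x < Min B}"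
        using YgtB Min_le[OF fAB(2)] Max_ge[OF fAB(2)] ne(2) by (auto, meson Max_in fAB(2) dual_order.trans leD less_imp_le)
      finally have L2: "lamNC x' \<rho> = l1" unfolding l1_def .
      show ?thesis using c1 c2 L1 L2 lam\<sigma> lam\<rho> by metis
    qed
  qed
qed


lemma orient:
  assumes "\<pi> \<in> NC n" "A \<in> \<pi>" "B \<in> \<pi>" "A \<noteq> B"
  shows "Min A < Min B \<or> Min B < Min A"
proof -
  have p: "partition_on {1..n} \<pi>" using NC_part assms by blast
  have "Min A \<noteq> Min B"
  proof
    assume "Min A = Min B"
    moreover have "Min A \<in> A" "Min B \<in> B" using Min_in NC_finite_block[OF assms(1)] part_nonempty[OF p] assms by auto
    ultimately show False using part_dj[OF p assms(2-4)] by auto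
  qed
  then show ?thesis by linarith
qed

lemma cover_mrg_ord:
  assumes "pcover (NC n) refines \<pi> \<sigma>"
  shows "\<exists>A B. A \<in> \<pi> \<and> B \<in> \<pi> \<and> A \<noteq> B \<and> Min A < Min B \<and> \<sigma> = mrg \<pi> A B"
proof -
  obtain A B where AB: "A \<in> \<pi>" "B \<in> \<pi>" "A \<noteq> B" "\<sigma> = mrg \<pi> A B" using cover_mrg[OF assms] by blast
  have \<pi>: "\<pi> \<in> NC n" using assms unfolding pcover_def by auto
  from orient[OF \<pi> AB(1-3)] show ?thesis
  proof
    assume "Min A < Min B" then show ?thesis using AB by blast
  next
    assume "Min B < Min A" then show ?thesis using AB mrg_sym by metis
  qed
qed

lemma rts:
  assumes c1: "pcover (NC n) refines \<pi> \<sigma>" and c2: "pcover (NC n) refines \<sigma> \<rho>"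
    and lt: "lamNC \<pi> \<sigma> < lamNC \<sigma> \<rho>"
  shows "\<exists>x'. pcover (NC n) refines \<pi> x' \<and> pcover (NC n) refines x' \<rho> \<and>
     lamNC \<pi> x' = lamNC \<sigma> \<rho> \<and> lamNC x' \<rho> = lamNC \<pi> \<sigma>"
proof -
  obtain A B where AB: "A \<in> \<pi>" "B \<in> \<pi>" "A \<noteq> B" "Min A < Min B" "\<sigma> = mrg \<pi> A B"
    using cover_mrg_ord[OF c1] by blast
  obtain X Y where XY: "X \<in> \<sigma>" "Y \<in> \<sigma>" "X \<noteq> Y" "Min X < Min Y" "\<rho> = mrg \<sigma> X Y"
    using cover_mrg_ord[OF c2] by blast
  have \<pi>: "\<pi> \<in> NC n" and \<sigma>: "\<sigma> \<in> NC n" and \<rho>: "\<rho> \<in> NC n" using c1 c2 unfolding pcover_def by auto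
  have "lamNC \<pi> \<sigma> = Max {x\<in>A. x < Min B}" using lam_mrg[OF NC_part[OF \<pi>] AB(1-4)] AB(5) by simp
  moreover have "lamNC \<sigma> \<rho> = Max {x\<in>X. x < Min Y}" using lam_mrg[OF NC_part[OF \<sigma>] XY(1-4)] XY(5) by simp
  ultimately have "Max {x\<in>A. x < Min B} < Max {x\<in>X. x < Min Y}" using lt by simp
  then show ?thesis using rts_core[OF \<pi> AB(1-4) AB(5) \<sigma> XY(1-4) XY(5) \<rho>] by blast
qed

lemma labs_nth: "Suc j < length c \<Longrightarrow> labs c ! j = lamNC (c ! j) (c ! Suc j)"
proof -
  assume h: "Suc j < length c"
  then have "j < length c - 1" by simp
  then show ?thesis unfolding labs_def by simp
qed

abbreviation QE :: "nat \<Rightarrow> nat set set list \<Rightarrow> nat set set list \<Rightarrow> bool" where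
  "QE n \<equiv> quad_exch (NC n) refines lamNC"

lemma qe_props:
  assumes c: "c \<in> SC n" and q: "QE n c d"
  shows "d \<in> SC n" "last d = last c" "length d = length c"
    "\<exists>k. Suc k < length (labs c) \<and> labs c ! k < labs c ! Suc k \<and>
         labs d = (labs c)[k := labs c ! Suc k, Suc k := labs c ! k]"
proof -
  obtain i x' where h: "0 < i" "Suc i < length c" "d = c[i := x']"
    "lamNC (c ! (i - 1)) (c ! i) < lamNC (c ! i) (c ! Suc i)"
    "pcover (NC n) refines (c ! (i - 1)) x'" "pcover (NC n) refines x' (c ! Suc i)"
    "lamNC (c ! (i - 1)) x' = lamNC (c ! i) (c ! Suc i)" "lamNC x' (c ! Suc i) = lamNC (c ! (i - 1)) (c ! i)"
    using q unfolding quad_exch_def by blast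
  have cs: "c \<noteq> []" "hd c = NC_bot n" "set c \<subseteq> NC n" "\<And>j. Suc j < length c \<Longrightarrow> pcover (NC n) refines (c ! j) (c ! Suc j)"
    using c unfolding sat_chains_def by auto
  show len: "length d = length c" using h(3) by simp
  have dj: "d ! j = (if j = i then x' else c ! j)" if "j < length c" for j using h(3) that by simp
  show "last d = last c"
  proof -
    have "last d = d ! (length c - 1)" using len cs(1) h(3) by (simp add: last_conv_nth)
    also have "\<dots> = c ! (length c - 1)" using dj[of "length c - 1"] h(2) cs(1) by auto
    finally show ?thesis using cs(1) by (simp add: last_conv_nth)
  qed
  show "d \<in> SC n"
    unfolding sat_chains_def
  proof (intro CollectI conjI allI impI)
    show "d \<noteq> []" using cs(1) h(3) by simp
    show "hd d = NC_bot n" using cs(1,2) h(1,3) by (cases c) (auto simp: nth_Cons split: nat.splits)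
    have "x' \<in> NC n" using h(5) unfolding pcover_def by auto
    then show "set d \<subseteq> NC n" using cs(3) h(3) set_update_subset_insert by fastforce
    fix j assume j: "Suc j < length d"
    show "pcover (NC n) refines (d ! j) (d ! Suc j)"
    proof -
      consider "j = i - 1" | "j = i" | "j \<noteq> i - 1" "j \<noteq> i" by blast
      then show ?thesis
      proof cases
        case 1 then show ?thesis using h(5) dj j len h(1) by auto
      next
        case 2 then show ?thesis using h(6) dj j len by auto
      next
        case 3
        then have "Suc j \<noteq> i" using h(1) by auto
        then show ?thesis using cs(4)[of j] dj j len 3 by auto
      qed
    qed
  qed
  have ll: "length (labs d) = length (labs c)" using len by (simp add: length_labs)
  show "\<exists>k. Suc k < length (labs c) \<and> labs c ! k < labs c ! Suc k \<and>
         labs d = (labs c)[k := labs c ! Suc k, Suc k := labs c ! k]"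
  proof (intro exI conjI)
    let ?k = "i - 1"
    have Sk: "Suc ?k = i" using h(1) by simp
    have lab: "labs e ! j = lamNC (e ! j) (e ! Suc j)" if "Suc j < length e" for e :: "nat set set list" and j
      using labs_nth that by blast
    show "Suc ?k < length (labs c)" using Sk h(2) by (simp add: length_labs)
    show "labs c ! ?k < labs c ! Suc ?k" using h(4) lab Sk h(2) by (metis Suc_lessD)
    show "labs d = (labs c)[?k := labs c ! Suc ?k, Suc ?k := labs c ! ?k]"
    proof (rule nth_equalityI)
      show "length (labs d) = length ((labs c)[?k := labs c ! Suc ?k, Suc ?k := labs c ! ?k])" using ll by simp
      fix j assume "j < length (labs d)"
      then have j: "Suc j < length c" using len by (simp add: length_labs)
      have jd: "Suc j < length d" using j len by simp
      consider "j = ?k" | "j = i" | "j \<noteq> ?k" "j \<noteq> i" by blast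
      then show "labs d ! j = (labs c)[?k := labs c ! Suc ?k, Suc ?k := labs c ! ?k] ! j"
      proof cases
        case 1
        have "labs d ! j = lamNC (c ! (i - 1)) x'" using lab[OF jd] dj 1 j h(1) Sk by auto
        also have "\<dots> = labs c ! Suc ?k" using h(7) lab[of i c] h(2) Sk by simp
        finally show ?thesis using 1 Sk j by (simp add: length_labs)
      next
        case 2
        have "labs d ! j = lamNC x' (c ! Suc i)" using lab[OF jd] dj 2 j by auto
        also have "\<dots> = labs c ! ?k" using h(8) lab[of ?k c] h(2) Sk by simp
        finally show ?thesis using 2 Sk j by (simp add: length_labs)
      next
        case 3
        then have "Suc j \<noteq> i" using h(1) by auto
        then have "labs d ! j = labs c ! j" using lab[OF jd] lab[OF j] dj j 3 by auto
        then show ?thesis using 3 Sk by simp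
      qed
    qed
  qed
qed

lemma qe_cnt:
  assumes c: "c \<in> SC n" and q: "QE n c d"
  shows "cnt d = cnt c" "Phi d = Phi c"
proof -
  obtain k where k: "Suc k < length (labs c)" "labs d = (labs c)[k := labs c ! Suc k, Suc k := labs c ! k]"
    using qe_props(4)[OF c q] by blast
  have "mset (labs d) = mset (labs c)" using mset_swap[of "Suc k" "labs c" k] k by simp
  then show cd: "cnt d = cnt c" unfolding cnt_def by auto
  show "Phi d = Phi c" unfolding Phi_def dy_def cd using qe_props(2)[OF c q] by simp
qed

definition W :: "nat list \<Rightarrow> nat" where
  "W xs = (\<Sum>j<length xs. Suc j * xs ! j)"

lemma W_swap:
  assumes "Suc k < length xs" "xs ! k < xs ! Suc k"
  shows "W (xs[k := xs ! Suc k, Suc k := xs ! k]) < W xs"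
proof -
  let ?ys = "xs[k := xs ! Suc k, Suc k := xs ! k]"
  let ?S = "{..<length xs}" let ?D = "{k, Suc k}"
  have D: "?D \<subseteq> ?S" using assms by auto
  have fin: "finite ?S" by simp
  have sp: "(\<Sum>j\<in>?S. f j) = (\<Sum>j\<in>?S - ?D. f j) + (\<Sum>j\<in>?D. f j)" for f :: "nat \<Rightarrow> nat"
    using sum.subset_diff[OF D fin] by simp
  have eq: "(\<Sum>j\<in>?S - ?D. Suc j * ?ys ! j) = (\<Sum>j\<in>?S - ?D. Suc j * xs ! j)"
    by (intro sum.cong) auto
  have ys: "?ys ! k = xs ! Suc k" "?ys ! Suc k = xs ! k" using assms by auto
  have "(\<Sum>j\<in>?D. Suc j * ?ys ! j) < (\<Sum>j\<in>?D. Suc j * xs ! j)"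
    using ys assms(2) by (simp add: algebra_simps)
  then show ?thesis unfolding W_def using sp[of "\<lambda>j. Suc j * ?ys ! j"] sp[of "\<lambda>j. Suc j * xs ! j"] eq by simp
qed

definition asc_free :: "nat set set list \<Rightarrow> bool" where
  "asc_free c \<longleftrightarrow> (\<forall>j. Suc j < length (labs c) \<longrightarrow> labs c ! Suc j \<le> labs c ! j)"

abbreviation CE :: "nat \<Rightarrow> (nat set set list \<times> nat set set list) set" where
  "CE n \<equiv> chain_equiv (NC n) refines (NC_bot n) lamNC"

lemma CE_base: "c \<in> SC n \<Longrightarrow> QE n c d \<Longrightarrow> (c, d) \<in> CE n"
  using qe_props(1)[of c n d] unfolding chain_equiv_def by (intro r_into_rtrancl) blast

lemma to_asc_free:
  assumes "c \<in> SC n"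
  shows "\<exists>d. (c, d) \<in> CE n \<and> d \<in> SC n \<and> asc_free d"
  using assms
proof (induction "W (labs c)" arbitrary: c rule: less_induct)
  case less
  show ?case
  proof (cases "asc_free c")
    case True
    have "(c, c) \<in> CE n" unfolding chain_equiv_def by simp
    then show ?thesis using True less.prems by blast
  next
    case False
    then obtain j where j: "Suc j < length (labs c)" "labs c ! j < labs c ! Suc j"
      unfolding asc_free_def by (auto simp: not_le)
    let ?i = "Suc j"
    have len: "Suc ?i < length c" using j(1) by (simp add: length_labs)
    have lab: "labs c ! m = lamNC (c ! m) (c ! Suc m)" if "Suc m < length c" for m
      using labs_nth that by blast
    have cov: "\<And>m. Suc m < length c \<Longrightarrow> pcover (NC n) refines (c ! m) (c ! Suc m)"
      using less.prems unfolding sat_chains_def by auto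
    have lt: "lamNC (c ! j) (c ! ?i) < lamNC (c ! ?i) (c ! Suc ?i)" using j(2) lab len by simp
    obtain x' where x': "pcover (NC n) refines (c ! j) x'" "pcover (NC n) refines x' (c ! Suc ?i)"
      "lamNC (c ! j) x' = lamNC (c ! ?i) (c ! Suc ?i)" "lamNC x' (c ! Suc ?i) = lamNC (c ! j) (c ! ?i)"
      using rts[OF cov cov lt] len by fastforce
    define d where "d = c[?i := x']"
    have q: "QE n c d" unfolding quad_exch_def d_def
      using len lt x' by (intro exI[of _ ?i] exI[of _ x']) simp
    have dS: "d \<in> SC n" using qe_props(1)[OF less.prems q] .
    obtain k where k: "Suc k < length (labs c)" "labs c ! k < labs c ! Suc k"
      "labs d = (labs c)[k := labs c ! Suc k, Suc k := labs c ! k]" using qe_props(4)[OF less.prems q] by blast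
    have "W (labs d) < W (labs c)" using W_swap[OF k(1,2)] k(3) by simp
    then obtain e where e: "(d, e) \<in> CE n" "e \<in> SC n" "asc_free e" using less.hyps dS by blast
    have "(c, d) \<in> CE n" using CE_base[OF less.prems q] .
    then have "(c, e) \<in> CE n" using e(1) unfolding chain_equiv_def by (rule rtrancl_trans)
    then show ?thesis using e by blast
  qed
qed

lemma CE_inv:
  assumes "(c, d) \<in> CE n" "c \<in> SC n"
  shows "d \<in> SC n \<and> Phi d = Phi c"
  using assms unfolding chain_equiv_def
proof (induction rule: rtrancl_induct)
  case base then show ?case by simp
next
  case (step y z)
  then have yz: "y \<in> SC n" "z \<in> SC n" "QE n y z \<or> QE n z y" by auto
  have "Phi z = Phi y" using yz qe_cnt by metis
  then show ?case using step yz by simp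
qed

lemma CE_sym: "sym (CE n)"
  unfolding chain_equiv_def by (rule sym_rtrancl) (auto simp: sym_def)

lemma CE_trans: "trans (CE n)"
  unfolding chain_equiv_def by (rule trans_rtrancl)


lemma mrg_inv0:
  fixes A B :: "nat set" and \<pi> :: "nat set set"
  assumes "A \<union> B \<notin> \<pi>" "A \<in> \<pi>" "B \<in> \<pi>"
  shows "insert A (insert B (insert (A \<union> B) (\<pi> - {A, B}) - {A \<union> B})) = \<pi>"
proof -
  have "insert (A \<union> B) (\<pi> - {A, B}) - {A \<union> B} = \<pi> - {A, B}" using assms(1) by auto
  then show ?thesis using assms(2,3) by auto
qed

lemma dec_last:
  assumes "\<forall>j. Suc j < length xs \<longrightarrow> xs ! Suc j \<le> xs ! j" "j < length (xs :: nat list)"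
  shows "last xs \<le> xs ! j"
proof -
  have "\<forall>j. j + m < length xs \<longrightarrow> xs ! (j + m) \<le> xs ! j" for m
  proof (induction m)
    case 0 then show ?case by simp
  next
    case (Suc m)
    show ?case
    proof (intro allI impI)
      fix j assume h: "j + Suc m < length xs"
      then have "xs ! (j + Suc m) \<le> xs ! (j + m)" using assms(1)[rule_format, of "j + m"] by simp
      also have "\<dots> \<le> xs ! j" using Suc h by simp
      finally show "xs ! (j + Suc m) \<le> xs ! j" .
    qed
  qed
  then have "xs ! (j + (length xs - 1 - j)) \<le> xs ! j" using assms(2) by (metis add_diff_inverse_nat diff_less less_nat_zero_code less_one not_less_iff_gr_or_eq diff_diff_left le_add_diff_inverse2 Suc_leI zero_less_diff)
  moreover have "j + (length xs - 1 - j) = length xs - 1" using assms(2) by simp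
  moreover have "xs \<noteq> []" using assms(2) by auto
  ultimately show ?thesis by (simp add: last_conv_nth)
qed

lemma asc_free_butlast:
  assumes "asc_free c" "c \<noteq> []"
  shows "asc_free (butlast c)"
proof (cases "butlast c = []")
  case True then show ?thesis unfolding asc_free_def labs_def by simp
next
  case False
  have "labs c = labs (butlast c) @ [lamNC (last (butlast c)) (last c)]"
    using labs_snoc[OF False, of "last c"] assms(2) by simp
  show ?thesis unfolding asc_free_def
  proof (intro allI impI)
    fix j assume j: "Suc j < length (labs (butlast c))"
    have "labs c ! Suc j = labs (butlast c) ! Suc j" "labs c ! j = labs (butlast c) ! j"
      using j \<open>labs c = _\<close> by (simp_all add: nth_append)
    moreover have "Suc j < length (labs c)" using j \<open>labs c = _\<close> by simp
    ultimately show "labs (butlast c) ! Suc j \<le> labs (butlast c) ! j" using assms(1) unfolding asc_free_def by metis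
  qed
qed

lemma uniq:
  assumes "c \<in> SC n" "d \<in> SC n" "asc_free c" "asc_free d" "last c = last d" "cnt c = cnt d"
  shows "c = d"
  using assms
proof (induction "length c" arbitrary: c d rule: less_induct)
  case less
  have ms: "mset (labs c) = mset (labs d)" using less.prems(6) unfolding cnt_def by (intro multiset_eqI) metis
  then have ll: "length (labs c) = length (labs d)" using mset_eq_length by blast
  have cne: "c \<noteq> []" using less.prems(1) unfolding sat_chains_def by blast
  have dne: "d \<noteq> []" using less.prems(2) unfolding sat_chains_def by blast
  have "length c \<noteq> 0" "length d \<noteq> 0" using cne dne by auto
  moreover have "length c - 1 = length d - 1" using ll by (simp only: length_labs)
  ultimately have lcd: "length c = length d" by linarith
  show ?case
  proof (cases "length c \<ge> 2")
    case False
    moreover have "length c \<noteq> 0" using cne by simp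
    ultimately have "length c = 1" by linarith
    then have l1: "length c = 1" "length d = 1" using lcd by auto
    obtain x where cx: "c = [x]" using l1(1) by (cases c) auto
    obtain y where dy: "d = [y]" using l1(2) by (cases d) auto
    have "[x] \<in> SC n" "[y] \<in> SC n" using less.prems(1,2) cx dy by simp_all
    then have "x = NC_bot n" "y = NC_bot n" unfolding sat_single by simp_all
    then show ?thesis using cx dy by simp
  next
    case True
    have Td: "length d \<ge> 2" using True lcd by simp
    obtain c0 A B where dc: "c0 \<in> SC n" "c = c0 @ [mrg (last c0) A B]" "A \<in> last c0" "B \<in> last c0" "A \<noteq> B"
      "Min A < Min B" "last c0 \<in> NC n" "mrg (last c0) A B \<in> NC n" using chain_decomp[OF less.prems(1) True] by blast
    obtain d0 A' B' where dd: "d0 \<in> SC n" "d = d0 @ [mrg (last d0) A' B']" "A' \<in> last d0" "B' \<in> last d0" "A' \<noteq> B'"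
      "Min A' < Min B'" "last d0 \<in> NC n" "mrg (last d0) A' B' \<in> NC n" using chain_decomp[OF less.prems(2) Td] by blast
    have c0ne: "c0 \<noteq> []" using dc(1) unfolding sat_chains_def by blast
    have d0ne: "d0 \<noteq> []" using dd(1) unfolding sat_chains_def by blast
    have pc: "partition_on {1..n} (last c0)" using NC_part[OF dc(7)] .
    have pd: "partition_on {1..n} (last d0)" using NC_part[OF dd(7)] .
    define a where "a = Max {x\<in>A. x < Min B}"
    define a' where "a' = Max {x\<in>A'. x < Min B'}"
    have lamc: "lamNC (last c0) (mrg (last c0) A B) = a" unfolding a_def using lam_mrg[OF pc dc(3-6)] .
    have lamd: "lamNC (last d0) (mrg (last d0) A' B') = a'" unfolding a'_def using lam_mrg[OF pd dd(3-6)] .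
    have labc: "labs c = labs c0 @ [a]" using labs_snoc[OF c0ne] dc(2) lamc by simp
    have labd: "labs d = labs d0 @ [a']" using labs_snoc[OF d0ne] dd(2) lamd by simp
    have minc: "\<forall>y\<in>set (labs c). a \<le> y"
    proof
      fix y assume "y \<in> set (labs c)"
      then obtain j where "j < length (labs c)" "labs c ! j = y" by (auto simp: in_set_conv_nth)
      then show "a \<le> y" using dec_last[of "labs c" j] less.prems(3) labc unfolding asc_free_def by auto
    qed
    have mind: "\<forall>y\<in>set (labs d). a' \<le> y"
    proof
      fix y assume "y \<in> set (labs d)"
      then obtain j where "j < length (labs d)" "labs d ! j = y" by (auto simp: in_set_conv_nth)
      then show "a' \<le> y" using dec_last[of "labs d" j] less.prems(4) labd unfolding asc_free_def by auto
    qed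
    have sets: "set (labs c) = set (labs d)" using ms by (metis set_mset_mset)
    have "a \<in> set (labs d)" "a' \<in> set (labs c)" using sets labc labd by auto
    then have aa: "a' = a" using minc mind by (meson antisym)
    have fA: "finite A" "A \<noteq> {}" using NC_finite_block[OF dc(7) dc(3)] part_nonempty[OF pc dc(3)] by auto
    have fA': "finite A'" "A' \<noteq> {}" using NC_finite_block[OF dd(7) dd(3)] part_nonempty[OF pd dd(3)] by auto
    have fB: "finite B" "B \<noteq> {}" using NC_finite_block[OF dc(7) dc(4)] part_nonempty[OF pc dc(4)] by auto
    have fB': "finite B'" "B' \<noteq> {}" using NC_finite_block[OF dd(7) dd(4)] part_nonempty[OF pd dd(4)] by auto
    have la: "a \<in> A" "a < Min B" using lam_in[OF fA dc(6)] unfolding a_def by auto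
    have la': "a \<in> A'" "a < Min B'" using lam_in[OF fA' dd(6)] aa unfolding a'_def by auto
    have lastc: "last c = mrg (last c0) A B" using dc(2) by simp
    have lastd: "last d = mrg (last d0) A' B'" using dd(2) by simp
    have pl: "partition_on {1..n} (last c)" using NC_part[OF dc(8)] lastc by simp
    have S: "A \<union> B \<in> last c" using lastc mrg_in by metis
    have S': "A' \<union> B' \<in> last c" using less.prems(5) lastd mrg_in by metis
    have SS: "A \<union> B = A' \<union> B'" using part_block_eq[OF pl S S'] la(1) la'(1) by blast
    have cntc: "cnt c x = cnt c0 x + (if x = a then 1 else 0)" for x using cnt_snoc[OF c0ne] dc(2) lamc by simp
    have cntd: "cnt d x = cnt d0 x + (if x = a then 1 else 0)" for x using cnt_snoc[OF d0ne] dd(2) lamd aa by simp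
    have FRc: "FR (A \<union> B) (cnt c) a = B"
    proof (rule fr_unique)
      show "dyck B (dy c0 B)" using chain_inv[OF dc(1)] dc(4) unfolding Phi_def by auto
      show "finite A" using fA by simp
      show "A \<inter> B = {}" using part_dj[OF pc dc(3-5)] .
      show "a \<in> A" using la by simp
      show "\<forall>b\<in>B. a < b" using la(2) Min_le[OF fB(1)] by fastforce
      have mg: "mergeable A B" using mergeable_nc[OF dc(7) dc(3-6)] .
      show "\<forall>x\<in>A. x \<le> a \<or> (\<forall>b\<in>B. b < x)"
      proof
        fix x assume x: "x \<in> A"
        show "x \<le> a \<or> (\<forall>b\<in>B. b < x)"
        proof (cases "x < Min B")
          case True then show ?thesis unfolding a_def using x fA(1) by simp
        next
          case False then have "Max B < x" using mg x unfolding mergeable_def by blast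
          then show ?thesis using Max_ge[OF fB(1)] by fastforce
        qed
      qed
      show "\<forall>x\<in>B. cnt c x = dy c0 B x" using cntc la(2) Min_le[OF fB(1)] unfolding dy_def by fastforce
    qed
    have FRd: "FR (A' \<union> B') (cnt d) a = B'"
    proof (rule fr_unique)
      show "dyck B' (dy d0 B')" using chain_inv[OF dd(1)] dd(4) unfolding Phi_def by auto
      show "finite A'" using fA' by simp
      show "A' \<inter> B' = {}" using part_dj[OF pd dd(3-5)] .
      show "a \<in> A'" using la' by simp
      show "\<forall>b\<in>B'. a < b" using la'(2) Min_le[OF fB'(1)] by fastforce
      have mg: "mergeable A' B'" using mergeable_nc[OF dd(7) dd(3-6)] .
      show "\<forall>x\<in>A'. x \<le> a \<or> (\<forall>b\<in>B'. b < x)"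
      proof
        fix x assume x: "x \<in> A'"
        show "x \<le> a \<or> (\<forall>b\<in>B'. b < x)"
        proof (cases "x < Min B'")
          case True then show ?thesis unfolding aa[symmetric] a'_def using x fA'(1) by simp
        next
          case False then have "Max B' < x" using mg x unfolding mergeable_def by blast
          then show ?thesis using Max_ge[OF fB'(1)] by fastforce
        qed
      qed
      show "\<forall>x\<in>B'. cnt d x = dy d0 B' x" using cntd la'(2) Min_le[OF fB'(1)] unfolding dy_def by fastforce
    qed
    have BB: "B = B'" using FRc FRd SS less.prems(6) by simp
    have djc: "A \<inter> B = {}" using part_dj[OF pc dc(3-5)] .
    have djd: "A' \<inter> B' = {}" using part_dj[OF pd dd(3-5)] .
    have AA: "A = A'"
    proof -
      have "A = (A \<union> B) - B" using djc by blast
      also have "\<dots> = (A' \<union> B') - B'" using SS BB by simp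
      also have "\<dots> = A'" using djd by blast
      finally show ?thesis .
    qed
    have l0: "last c0 = last d0"
    proof -
      have "last c0 = insert A (insert B (last c - {A \<union> B}))"
        using mrg_inv0[OF union_notin[OF pc dc(3-5)] dc(3,4)] lastc unfolding mrg_def by simp
      also have "\<dots> = insert A' (insert B' (last d - {A' \<union> B'}))" using AA BB less.prems(5) by simp
      also have "\<dots> = last d0"
        using mrg_inv0[OF union_notin[OF pd dd(3-5)] dd(3,4)] lastd unfolding mrg_def by simp
      finally show ?thesis .
    qed
    have cnt0: "cnt c0 = cnt d0"
    proof
      fix x show "cnt c0 x = cnt d0 x" using cntc[of x] cntd[of x] less.prems(6) by simp
    qed
    have af: "asc_free c0" "asc_free d0"
      using asc_free_butlast[OF less.prems(3) cne] asc_free_butlast[OF less.prems(4) dne] dc(2) dd(2) by auto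
    have "length c0 < length c" using dc(2) by simp
    then have "c0 = d0" using less.hyps dc(1) dd(1) af l0 cnt0 by blast
    then show ?thesis using dc(2) dd(2) AA BB by simp
  qed
qed

lemma Phi_inj_CE:
  assumes "c \<in> SC n" "d \<in> SC n" "Phi c = Phi d"
  shows "(c, d) \<in> CE n"
proof -
  obtain c' where c': "(c, c') \<in> CE n" "c' \<in> SC n" "asc_free c'" using to_asc_free[OF assms(1)] by blast
  obtain d' where d': "(d, d') \<in> CE n" "d' \<in> SC n" "asc_free d'" using to_asc_free[OF assms(2)] by blast
  have "Phi c' = Phi c" "Phi d' = Phi d" using CE_inv c' d' assms by blast+
  then have "Phi c' = Phi d'" using assms(3) by simp
  then have "c' = d'" using uniq[OF c'(2) d'(2) c'(3) d'(3)] Phi_eq[OF c'(2) d'(2)] by blast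
  then have "(d', d) \<in> CE n" using d'(1) CE_sym unfolding sym_def by blast
  then show ?thesis using c'(1) \<open>c' = d'\<close> CE_trans unfolding trans_def by blast
qed


lemma split_NC:
  assumes \<pi>: "\<pi> \<in> NC n" and S: "S \<in> \<pi>" "b \<in> S" "S \<noteq> {b}"
  shows "insert (S - {b}) (insert {b} (\<pi> - {S})) \<in> NC n"
proof -
  let ?\<tau> = "insert (S - {b}) (insert {b} (\<pi> - {S}))"
  have p: "partition_on {1..n} \<pi>" using NC_part[OF \<pi>] .
  have Ssub: "S \<subseteq> {1..n}" using part_sub[OF p S(1)] .
  have ne: "S - {b} \<noteq> {}" using S(2,3) by blast
  have pt: "partition_on {1..n} ?\<tau>"
  proof (rule partition_onI)
    show "\<Union> ?\<tau> = {1..n}" using partition_onD1[OF p] S(1,2) by auto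
    show "{} \<notin> ?\<tau>" using ne part_nonempty[OF p] by auto
    fix P Q assume PQ: "P \<in> ?\<tau>" "Q \<in> ?\<tau>" "P \<noteq> Q"
    have dS: "X \<inter> S = {}" if "X \<in> \<pi> - {S}" for X using part_dj[OF p _ S(1)] that by blast
    have cP: "P = S - {b} \<or> P = {b} \<or> P \<in> \<pi> - {S}" using PQ(1) by blast
    have cQ: "Q = S - {b} \<or> Q = {b} \<or> Q \<in> \<pi> - {S}" using PQ(2) by blast
    show "disjnt P Q" unfolding disjnt_def
    proof -
      from cP cQ show "P \<inter> Q = {}"
      proof (elim disjE)
        assume "P \<in> \<pi> - {S}" "Q \<in> \<pi> - {S}" then show ?thesis using part_dj[OF p] PQ(3) by blast
      next
        assume "P = S - {b}" "Q = S - {b}" then show ?thesis using PQ(3) by simp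
      next
        assume "P = {b}" "Q = {b}" then show ?thesis using PQ(3) by simp
      next
        assume "P = S - {b}" "Q = {b}" then show ?thesis by simp
      next
        assume "P = {b}" "Q = S - {b}" then show ?thesis by simp
      next
        assume "P = S - {b}" "Q \<in> \<pi> - {S}" then show ?thesis using dS[of Q] by blast
      next
        assume "P \<in> \<pi> - {S}" "Q = S - {b}" then show ?thesis using dS[of P] by blast
      next
        assume "P = {b}" "Q \<in> \<pi> - {S}" then show ?thesis using dS[of Q] S(2) by blast
      next
        assume "P \<in> \<pi> - {S}" "Q = {b}" then show ?thesis using dS[of P] S(2) by blast
      qed
    qed
  qed
  have nct: "noncrossing ?\<tau>"
    unfolding noncrossing_def
  proof (clarify)
    fix a b' c d X Y assume h: "a < b'" "b' < c" "c < d" "X \<in> ?\<tau>" "Y \<in> ?\<tau>" "X \<noteq> Y"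
      "a \<in> X" "c \<in> X" "b' \<in> Y" "d \<in> Y"
    have nX: "X \<noteq> {b}" using h(1,2,7,8) by auto
    have nY: "Y \<noteq> {b}" using h(2,3,9,10) by auto
    have cX: "X = S - {b} \<or> X \<in> \<pi> - {S}" using h(4) nX by blast
    have cY: "Y = S - {b} \<or> Y \<in> \<pi> - {S}" using h(5) nY by blast
    define X' where "X' = (if X = S - {b} then S else X)"
    define Y' where "Y' = (if Y = S - {b} then S else Y)"
    have X': "X' \<in> \<pi>" "X \<subseteq> X'" using cX S(1) unfolding X'_def by auto
    have Y': "Y' \<in> \<pi>" "Y \<subseteq> Y'" using cY S(1) unfolding Y'_def by auto
    have "X' \<noteq> Y'" using cX cY h(6) unfolding X'_def Y'_def by auto
    then show False using nc_cross[OF NC_nc[OF \<pi>] X'(1) Y'(1) _ h(1-3)] h(7-10) X'(2) Y'(2) by blast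
  qed
  show ?thesis using pt nct unfolding NC_def by blast
qed

lemma card_part_le:
  assumes "partition_on {1..n} \<pi>"
  shows "card \<pi> \<le> n"
proof -
  have fin: "\<And>P. P \<in> \<pi> \<Longrightarrow> finite P" using part_sub[OF assms] by (meson finite_atLeastAtMost finite_subset)
  have inj: "inj_on Min \<pi>"
  proof (rule inj_onI)
    fix P Q assume "P \<in> \<pi>" "Q \<in> \<pi>" "Min P = Min Q"
    moreover have "Min P \<in> P" using Min_in[OF fin[OF \<open>P \<in> \<pi>\<close>] part_nonempty[OF assms \<open>P \<in> \<pi>\<close>]] .
    moreover have "Min Q \<in> Q" using Min_in[OF fin[OF \<open>Q \<in> \<pi>\<close>] part_nonempty[OF assms \<open>Q \<in> \<pi>\<close>]] .
    ultimately show "P = Q" using part_block_eq[OF assms \<open>P \<in> \<pi>\<close> \<open>Q \<in> \<pi>\<close>, of "Min P"] by simp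
  qed
  have "Min ` \<pi> \<subseteq> {1..n}"
  proof
    fix x assume "x \<in> Min ` \<pi>"
    then obtain P where P: "P \<in> \<pi>" "x = Min P" by blast
    have "Min P \<in> P" using Min_in[OF fin[OF P(1)] part_nonempty[OF assms P(1)]] .
    then show "x \<in> {1..n}" using part_sub[OF assms P(1)] P(2) by blast
  qed
  then have "card \<pi> \<le> card {1..n}" using card_inj_on_le[OF inj] by blast
  then show ?thesis by simp
qed

lemma NCDyck_fin:
  assumes "F \<in> NCDyck n"
  shows "finite F" "card F = card (fst ` F)" "card F \<le> n"
proof -
  have inj: "inj_on fst F" and nc: "fst ` F \<in> NC n" using assms unfolding NCDyck_def by auto
  show "finite F" using finite_imageD[OF NC_finite[OF nc] inj] .
  show "card F = card (fst ` F)" using card_image[OF inj] by simp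
  then show "card F \<le> n" using card_part_le[OF NC_part[OF nc]] by simp
qed

lemma surj_Phi:
  assumes "F \<in> NCDyck n"
  shows "\<exists>c\<in>SC n. Phi c = F"
  using assms
proof (induction "n - card F" arbitrary: F rule: less_induct)
  case less
  have dF: "\<And>S e. (S, e) \<in> F \<Longrightarrow> dyck S e" and inj: "inj_on fst F" and \<pi>: "fst ` F \<in> NC n"
    using less.prems unfolding NCDyck_def by auto
  let ?\<pi> = "fst ` F"
  have p: "partition_on {1..n} ?\<pi>" using NC_part[OF \<pi>] .
  show ?case
  proof (cases "\<exists>(S, e)\<in>F. 2 \<le> card S")
    case False
    have sgl: "\<exists>i. S = {i} \<and> e = (\<lambda>x. 0)" if Se: "(S, e) \<in> F" for S e
    proof -
      have d: "dyck S e" using dF Se .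
      then have "finite S" "S \<noteq> {}" unfolding dyck_def by auto
      moreover have "\<not> 2 \<le> card S" using False Se by blast
      moreover have "card S > 0" using calculation(1,2) by (simp add: card_gt_0_iff)
      ultimately have "card S = 1" by linarith
      then obtain i where i: "S = {i}" using card_1_singletonE by blast
      have "e = (\<lambda>x. 0)"
      proof
        fix x show "e x = 0"
        proof (cases "x = i")
          case True then show ?thesis using d i unfolding dyck_def by simp
        next
          case False then show ?thesis using d i unfolding dyck_def by simp
        qed
      qed
      then show ?thesis using i by simp
    qed
    have sgl_e: "e = (\<lambda>x. 0)" if Se: "(S, e) \<in> F" for S e using sgl[OF Se] by (elim exE conjE)
    have sgl_S: "\<exists>i. S = {i}" if Se: "(S, e) \<in> F" for S e using sgl[OF Se] by (elim exE conjE) simp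
    have sub: "?\<pi> \<subseteq> NC_bot n"
    proof
      fix S assume "S \<in> ?\<pi>"
      then obtain e where Se: "(S, e) \<in> F" by force
      then obtain i where i: "S = {i}" using sgl_S by blast
      then have "i \<in> {1..n}" using part_sub[OF p] \<open>S \<in> ?\<pi>\<close> by blast
      then show "S \<in> NC_bot n" unfolding NC_bot_def i by blast
    qed
    have pb: "partition_on {1..n} (NC_bot n)" using NC_part[OF NC_bot_NC] .
    have eqb: "?\<pi> = NC_bot n" using subset_part_eq[OF pb p sub] .
    have "F = (\<lambda>B. (B, \<lambda>y::nat. 0::nat)) ` ?\<pi>"
    proof
      show "F \<subseteq> (\<lambda>B. (B, \<lambda>y::nat. 0::nat)) ` ?\<pi>"
      proof
        fix z assume z: "z \<in> F"
        obtain S e where Se: "z = (S, e)" by (cases z)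
        then have "e = (\<lambda>x. 0)" using sgl_e z by blast
        moreover have "S \<in> ?\<pi>" using Se z by force
        ultimately show "z \<in> (\<lambda>B. (B, \<lambda>y::nat. 0::nat)) ` ?\<pi>" using Se by simp
      qed
      show "(\<lambda>B. (B, \<lambda>y::nat. 0::nat)) ` ?\<pi> \<subseteq> F"
      proof
        fix z assume "z \<in> (\<lambda>B. (B, \<lambda>y::nat. 0::nat)) ` ?\<pi>"
        then obtain S e where Se: "(S, e) \<in> F" "z = (S, \<lambda>y. 0)" by force
        then have "e = (\<lambda>x. 0)" using sgl_e by blast
        then show "z \<in> F" using Se by simp
      qed
    qed
    then have "Phi [NC_bot n] = F" unfolding Phi_single eqb by simp
    moreover have "[NC_bot n] \<in> SC n" unfolding sat_single using NC_bot_NC by simp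
    ultimately show ?thesis by blast
  next
    case True
    then obtain S e where Se: "(S, e) \<in> F" "2 \<le> card S" by blast
    obtain a b where ab: "a \<in> S" "b \<in> S" "a < b" "\<forall>z\<in>S. \<not> (a < z \<and> z < b)" "e b = 0" "1 \<le> e a"
      "dyck (S - {b}) (e(a := e a - 1))" using dyck_split[OF dF[OF Se(1)] Se(2)] by blast
    define A where "A = S - {b}"
    define e' where "e' = e(a := e a - 1)"
    define z0 :: "nat \<Rightarrow> nat" where "z0 = (\<lambda>x. 0)"
    define G where "G = F - {(S, e)}"
    define F0 where "F0 = insert (A, e') (insert ({b}, z0) G)"
    have SP: "S \<in> ?\<pi>" using Se(1) by force
    have aA: "a \<in> A" using ab unfolding A_def by auto
    have Sb: "S \<noteq> {b}" using Se(2) by auto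
    have fstG: "fst ` G = ?\<pi> - {S}"
    proof
      show "fst ` G \<subseteq> ?\<pi> - {S}"
      proof
        fix T assume "T \<in> fst ` G"
        then obtain g where Tg: "(T, g) \<in> F" "(T, g) \<noteq> (S, e)" unfolding G_def by force
        have "T \<noteq> S"
        proof
          assume "T = S"
          then have "fst (T, g) = fst (S, e)" by simp
          then have "(T, g) = (S, e)" using inj_onD[OF inj _ Tg(1) Se(1)] by blast
          then show False using Tg(2) by simp
        qed
        then show "T \<in> ?\<pi> - {S}" using Tg(1) by force
      qed
      show "?\<pi> - {S} \<subseteq> fst ` G" unfolding G_def using Se(1) by force
    qed
    have AnP: "A \<notin> ?\<pi>"
    proof
      assume "A \<in> ?\<pi>"
      then have "A = S" using part_block_eq[OF p _ SP, of A a] aA ab(1) by blast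
      then show False unfolding A_def using ab(2) by blast
    qed
    have bnP: "{b} \<notin> ?\<pi>"
    proof
      assume "{b} \<in> ?\<pi>"
      then have "{b} = S" using part_block_eq[OF p _ SP, of "{b}" b] ab(2) by blast
      then show False using Sb by simp
    qed
    have Anb: "A \<noteq> {b}" unfolding A_def by blast
    have fstF0: "fst ` F0 = insert (S - {b}) (insert {b} (?\<pi> - {S}))"
      unfolding F0_def A_def using fstG by simp
    have NC0: "fst ` F0 \<in> NC n" unfolding fstF0 using split_NC[OF \<pi> SP ab(2) Sb] .
    have AnG: "A \<notin> fst ` G" "{b} \<notin> fst ` G" using fstG AnP bnP by blast+
    have ninG: "(A, e') \<notin> G" "({b}, z0) \<notin> G"
    proof -
      show "(A, e') \<notin> G"
      proof
        assume "(A, e') \<in> G" then have "A \<in> fst ` G" by (rule image_eqI[rotated]) simp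
        then show False using AnG by blast
      qed
      show "({b}, z0) \<notin> G"
      proof
        assume "({b}, z0) \<in> G" then have "{b} \<in> fst ` G" by (rule image_eqI[rotated]) simp
        then show False using AnG by blast
      qed
    qed
    have injG: "inj_on fst G" using inj unfolding G_def by (rule inj_on_subset) blast
    have i1: "inj_on fst (insert ({b}, z0) G)"
    proof -
      have "fst ({b}, z0) \<notin> fst ` (G - {({b}, z0)})" using AnG(2) by auto
      then show ?thesis using injG inj_on_insert by blast
    qed
    have injF0: "inj_on fst F0"
    proof -
      have "fst ` (insert ({b}, z0) G - {(A, e')}) \<subseteq> insert {b} (fst ` G)" by auto
      then have "fst (A, e') \<notin> fst ` (insert ({b}, z0) G - {(A, e')})" using AnG(1) Anb by auto
      then show ?thesis unfolding F0_def using i1 inj_on_insert by blast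
    qed
    have dz: "dyck {b} z0" unfolding z0_def using dyck_single .
    have dF0: "\<forall>(B, g)\<in>F0. dyck B g" unfolding F0_def G_def using dF ab(7) dz unfolding A_def e'_def by auto
    have F0N: "F0 \<in> NCDyck n" unfolding NCDyck_def using dF0 injF0 NC0 by blast
    have finF: "finite F" using NCDyck_fin[OF less.prems] by simp
    have cG: "card G = card F - 1" unfolding G_def using Se(1) finF by simp
    have "F \<noteq> {}" using Se(1) by blast
    then have cF: "card F \<ge> 1" using finF by (simp add: Suc_le_eq card_gt_0_iff)
    have finG: "finite G" unfolding G_def using finF by simp
    have "card F0 = card G + 2" unfolding F0_def using ninG finG Anb by simp
    then have cF0: "card F0 = card F + 1" using cG cF by simp
    have "card F0 \<le> n" using NCDyck_fin[OF F0N] by simp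
    then have "n - card F0 < n - card F" using cF0 by simp
    then obtain c0 where c0: "c0 \<in> SC n" "Phi c0 = F0" using less.hyps F0N by blast
    have l0: "last c0 = fst ` F0" using fst_Phi[of c0] c0(2) by simp
    have Ain: "A \<in> last c0" "{b} \<in> last c0" using l0 unfolding F0_def by force+
    have mAb: "Min A < Min {b}"
    proof -
      have "finite A" using dF[OF Se(1)] unfolding A_def dyck_def by simp
      then have "Min A \<le> a" using aA by simp
      then show ?thesis using ab(3) by simp
    qed
    have Ab: "A \<union> {b} = S" unfolding A_def using ab(2) by blast
    have mrgeq: "mrg (last c0) A {b} = ?\<pi>"
    proof -
      have "last c0 - {A, {b}} = ?\<pi> - {S}" unfolding l0 F0_def using fstG ninG AnP bnP Anb by auto
      then show ?thesis unfolding mrg_def Ab using SP by auto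
    qed
    have pc0: "partition_on {1..n} (last c0)" using NC_part NC0 l0 by simp
    have cov: "pcover (NC n) refines (last c0) ?\<pi>"
      using mrg_cover[OF _ Ain Anb] NC0 l0 \<pi> mrgeq by simp
    have csc: "c0 @ [?\<pi>] \<in> SC n" using sat_snoc[OF c0(1) cov] .
    have c0ne: "c0 \<noteq> []" using c0(1) unfolding sat_chains_def by blast
    have fA: "finite A" using dF[OF Se(1)] unfolding A_def dyck_def by simp
    have ph: "Phi (c0 @ [?\<pi>]) = insert (dyck_merge A (dy c0 A) {b} (dy c0 {b})) (Phi c0 - {(A, dy c0 A), ({b}, dy c0 {b})})"
      using Phi_snoc[OF c0ne pc0 Ain Anb mAb fA] mrgeq by simp
    have dyA: "dy c0 A = e'" and dyb: "dy c0 {b} = z0"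
    proof -
      have "(A, dy c0 A) \<in> F0" "({b}, dy c0 {b}) \<in> F0" using Ain c0(2) unfolding Phi_def by auto
      moreover have "(A, e') \<in> F0" "({b}, z0) \<in> F0" unfolding F0_def by auto
      ultimately show "dy c0 A = e'" "dy c0 {b} = z0" using injF0 unfolding inj_on_def by force+
    qed
    have Mx: "Max {x\<in>A. x < Min {b}} = a"
    proof (rule Max_eqI)
      show "finite {x\<in>A. x < Min {b}}" using fA by simp
      show "a \<in> {x\<in>A. x < Min {b}}" using aA ab(3) by simp
      fix y assume "y \<in> {x\<in>A. x < Min {b}}"
      then have "y \<in> S" "y < b" unfolding A_def by auto
      then show "y \<le> a" using ab(4) by force
    qed
    have dm: "dyck_merge A e' {b} z0 = (S, e)"
      unfolding dyck_merge_def Mx Ab e'_def z0_def using ab(5,6) by (auto intro!: ext)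
    have "F0 - {(A, e'), ({b}, z0)} = G" unfolding F0_def using ninG Anb by auto
    then have "Phi (c0 @ [?\<pi>]) = insert (S, e) G" using ph dyA dyb dm c0(2) by simp
    also have "\<dots> = F" unfolding G_def using Se(1) by auto
    finally show ?thesis using csc by blast
  qed
qed


abbreviation Qc :: "nat \<Rightarrow> nat set set list set set" where
  "Qc n \<equiv> Q_carrier (NC n) refines (NC_bot n) lamNC"

abbreviation Rq :: "nat \<Rightarrow> (nat set set list set \<times> nat set set list set) set" where
  "Rq n \<equiv> {(X, Y). X \<in> Qc n \<and> Y \<in> Qc n \<and> (\<exists>c\<in>X. \<exists>d\<in>Y. prefix c d)}"

definition fQ :: "nat set set list set \<Rightarrow> (nat set \<times> (nat \<Rightarrow> nat)) set" where
  "fQ X = Phi (SOME c. c \<in> X)"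

lemma cls_self: "(c, c) \<in> CE n" unfolding chain_equiv_def by simp

lemma cls_eq:
  assumes "(c, d) \<in> CE n"
  shows "CE n `` {c} = CE n `` {d}"
proof -
  have dc: "(d, c) \<in> CE n" using assms CE_sym unfolding sym_def by blast
  show ?thesis
  proof
    show "CE n `` {c} \<subseteq> CE n `` {d}" using dc CE_trans unfolding trans_def by blast
    show "CE n `` {d} \<subseteq> CE n `` {c}" using assms CE_trans unfolding trans_def by blast
  qed
qed

lemma Qc_elem:
  assumes "X \<in> Qc n" "c \<in> X"
  shows "c \<in> SC n" "fQ X = Phi c"
proof -
  obtain c0 where c0: "c0 \<in> SC n" "X = CE n `` {c0}" using assms(1) unfolding Q_carrier_def by blast
  have inv: "d \<in> SC n \<and> Phi d = Phi c0" if "d \<in> X" for d using CE_inv[of c0 d n] c0 that by blast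
  show "c \<in> SC n" using inv assms(2) by blast
  have "c0 \<in> X" using c0 cls_self by blast
  then have "(SOME c. c \<in> X) \<in> X" by (rule someI)
  then show "fQ X = Phi c" unfolding fQ_def using inv assms(2) by metis
qed

lemma Qc_cls: "c \<in> SC n \<Longrightarrow> CE n `` {c} \<in> Qc n \<and> c \<in> CE n `` {c}"
  unfolding Q_carrier_def using cls_self by blast

lemma Qc_ne: "X \<in> Qc n \<Longrightarrow> \<exists>c. c \<in> X"
  unfolding Q_carrier_def using cls_self by blast

lemma fQ_inj: "inj_on fQ (Qc n)"
proof (rule inj_onI)
  fix X Y assume X: "X \<in> Qc n" and Y: "Y \<in> Qc n" and e: "fQ X = fQ Y"
  obtain c where c: "c \<in> SC n" "X = CE n `` {c}" using X unfolding Q_carrier_def by blast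
  obtain d where d: "d \<in> SC n" "Y = CE n `` {d}" using Y unfolding Q_carrier_def by blast
  have "fQ X = Phi c" using Qc_elem[OF X] c cls_self by blast
  moreover have "fQ Y = Phi d" using Qc_elem[OF Y] d cls_self by blast
  ultimately have "Phi c = Phi d" using e by simp
  then have "(c, d) \<in> CE n" using Phi_inj_CE c(1) d(1) by blast
  then show "X = Y" using cls_eq c(2) d(2) by blast
qed

lemma fQ_img: "fQ ` Qc n = NCDyck n"
proof
  show "fQ ` Qc n \<subseteq> NCDyck n"
  proof
    fix F assume "F \<in> fQ ` Qc n"
    then obtain X where X: "X \<in> Qc n" "F = fQ X" by blast
    obtain c where "c \<in> X" using Qc_ne[OF X(1)] by blast
    then show "F \<in> NCDyck n" using Qc_elem[OF X(1)] Phi_NCDyck X(2) by metis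
  qed
  show "NCDyck n \<subseteq> fQ ` Qc n"
  proof
    fix F assume "F \<in> NCDyck n"
    then obtain c where c: "c \<in> SC n" "Phi c = F" using surj_Phi by blast
    have "CE n `` {c} \<in> Qc n" "c \<in> CE n `` {c}" using Qc_cls[OF c(1)] by auto
    then have "fQ (CE n `` {c}) = F" using Qc_elem c(2) by metis
    then show "F \<in> fQ ` Qc n" using \<open>CE n `` {c} \<in> Qc n\<close> by blast
  qed
qed

lemma le_fwd:
  assumes "(X, Y) \<in> (Rq n)\<^sup>+"
  shows "NCDyck_le n (fQ X) (fQ Y)"
  using assms
proof (induction rule: trancl_induct)
  case (base Y)
  then obtain c d where cd: "X \<in> Qc n" "Y \<in> Qc n" "c \<in> X" "d \<in> Y" "prefix c d" by blast
  have "c \<in> SC n" "fQ X = Phi c" using Qc_elem[OF cd(1,3)] by auto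
  moreover have "d \<in> SC n" "fQ Y = Phi d" using Qc_elem[OF cd(2,4)] by auto
  ultimately show ?case using prefix_le cd(5) by metis
next
  case (step Y Z)
  then obtain c d where cd: "Y \<in> Qc n" "Z \<in> Qc n" "c \<in> Y" "d \<in> Z" "prefix c d" by blast
  have "c \<in> SC n" "fQ Y = Phi c" using Qc_elem[OF cd(1,3)] by auto
  moreover have "d \<in> SC n" "fQ Z = Phi d" using Qc_elem[OF cd(2,4)] by auto
  ultimately have "NCDyck_le n (fQ Y) (fQ Z)" using prefix_le cd(5) by metis
  then show ?case using step.IH unfolding NCDyck_le_def by (rule rtrancl_trans[rotated])
qed

lemma le_bwd_aux:
  assumes "(F1, F2) \<in> {(F, F'). merge_step n F F'}\<^sup>*" "X \<in> Qc n" "fQ X = F1"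
  shows "\<exists>Y\<in>Qc n. fQ Y = F2 \<and> (X, Y) \<in> (Rq n)\<^sup>*"
  using assms(1)
proof (induction rule: rtrancl_induct)
  case base then show ?case using assms(2,3) by blast
next
  case (step F F')
  then obtain Y1 where Y1: "Y1 \<in> Qc n" "fQ Y1 = F" "(X, Y1) \<in> (Rq n)\<^sup>*" by blast
  have ms: "merge_step n F F'" using step(2) by simp
  obtain c where c: "c \<in> Y1" using Qc_ne[OF Y1(1)] by blast
  have cS: "c \<in> SC n" and fc: "fQ Y1 = Phi c" using Qc_elem[OF Y1(1) c] by auto
  obtain \<sigma> where \<sigma>: "c @ [\<sigma>] \<in> SC n" "Phi (c @ [\<sigma>]) = F'" using merge_lift[OF cS] ms Y1(2) fc by metis
  let ?Y2 = "CE n `` {c @ [\<sigma>]}"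
  have Y2: "?Y2 \<in> Qc n" "c @ [\<sigma>] \<in> ?Y2" using Qc_cls[OF \<sigma>(1)] by auto
  have fY2: "fQ ?Y2 = F'" using Qc_elem[OF Y2] \<sigma>(2) by simp
  have pf: "prefix c (c @ [\<sigma>])" by simp
  have "(Y1, ?Y2) \<in> Rq n" using Y1(1) Y2 c pf by blast
  then have "(X, ?Y2) \<in> (Rq n)\<^sup>*" using Y1(3) by (meson rtrancl.rtrancl_into_rtrancl)
  then show ?case using Y2(1) fY2 by blast
qed

theorem main_iso:
  fixes n :: nat
  shows "order_iso (Q_carrier (NC n) refines (NC_bot n) lamNC)
                   (Q_le (NC n) refines (NC_bot n) lamNC)
                   (NCDyck n) (NCDyck_le n)"
  unfolding order_iso_def
proof (intro exI conjI ballI)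
  show "bij_betw fQ (Qc n) (NCDyck n)" unfolding bij_betw_def using fQ_inj fQ_img by blast
  fix X Y assume X: "X \<in> Qc n" and Y: "Y \<in> Qc n"
  show "Q_le (NC n) refines (NC_bot n) lamNC X Y \<longleftrightarrow> NCDyck_le n (fQ X) (fQ Y)"
  proof
    assume "Q_le (NC n) refines (NC_bot n) lamNC X Y"
    then have "(X, Y) \<in> (Rq n)\<^sup>+" unfolding Q_le_def .
    then show "NCDyck_le n (fQ X) (fQ Y)" by (rule le_fwd)
  next
    assume "NCDyck_le n (fQ X) (fQ Y)"
    then obtain Y' where Y': "Y' \<in> Qc n" "fQ Y' = fQ Y" "(X, Y') \<in> (Rq n)\<^sup>*"
      using le_bwd_aux[OF _ X refl] unfolding NCDyck_le_def by blast
    have "Y' = Y" using inj_onD[OF fQ_inj Y'(2) Y'(1) Y] .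
    then have XY: "(X, Y) \<in> (Rq n)\<^sup>*" using Y'(3) by simp
    have "(X, Y) \<in> (Rq n)\<^sup>+"
    proof (cases "X = Y")
      case True
      obtain c where "c \<in> X" using Qc_ne[OF X] by blast
      then have "(X, X) \<in> Rq n" using X by blast
      then show ?thesis using True by blast
    next
      case False then show ?thesis using XY by (simp add: rtrancl_eq_or_trancl)
    qed
    then show "Q_le (NC n) refines (NC_bot n) lamNC X Y" unfolding Q_le_def .
  qed
qed

theorem theorem5p7:
  fixes n :: nat
  assumes "n \<ge> 1"
  shows "order_iso (Q_carrier (NC n) refines (NC_bot n) lamNC)
                   (Q_le (NC n) refines (NC_bot n) lamNC)
                   (NCDyck n) (NCDyck_le n)"
  using main_iso .

end
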